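(* Let $p\ge3$ and let $\Gamma_p=\langle \iota,\gamma \mid \iota^2=\gamma^p=1\rangle$ be the Hecke group. For $x\ge1$ let $W_x$ be the set of reciprocal conjugacy classes in $\Gamma_p$ of word length at most $x$. Then there exist a constant $C>0$ and $x_0$ such that for all $x\ge x_0$, \[ 2\left|W_{\lfloor\frac{x}{2}\rfloor}\right|^{2}\leq C^2\left|W_{x}\right|. \]
   Context: The Hecke group $\Gamma_p$ is the Fuchsian group generated by $\iota: z\mapsto -1/z$ and $\alpha_p: z\mapsto z+2\cos(\pi/p)$; with $\gamma=\iota\alpha_p$ it has presentation $\langle \iota,\gamma\mid \iota^2=\gamma^p=1\rangle\cong\mathbb{Z}_2*\mathbb{Z}_p$. A non-trivial element $g$ is reciprocal if $hgh^{-1}=g^{-1}$ for some $h\in\Gamma_p$; a reciprocal class is a conjugacy class containing a reciprocal element. The length of a reduced word $\iota\gamma^{k_1}\cdots\iota\gamma^{k_n}$ ($-p/2\le k_i\le p/2$, $k_i\neq0$) is $\sum_i(1+|k_i|)$; the word length of a conjugacy class is the minimal length of a cyclically reduced word in it. *)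

theory Defs
  imports Complex_Main
begin

text \<open>The Hecke group Gamma_p = Z_2 * Z_p, realised via its normal forms: reduced words
  alternating between the letter Iota (the involution) and Gam k (gamma^k, 1 <= k <= p-1).\<close>

datatype hletter = Iota | Gam nat

fun hpush :: "nat \<Rightarrow> hletter \<Rightarrow> hletter list \<Rightarrow> hletter list" where
  "hpush p Iota (Iota # w) = w"
| "hpush p Iota w = Iota # w"
| "hpush p (Gam k) (Gam j # w) = (if (k + j) mod p = 0 then w else Gam ((k + j) mod p) # w)"
| "hpush p (Gam k) w = (if k mod p = 0 then w else Gam (k mod p) # w)"

definition hred :: "nat \<Rightarrow> hletter list \<Rightarrow> hletter list" where
  "hred p w = foldr (hpush p) w []"

definition hreduced :: "nat \<Rightarrow> hletter list \<Rightarrow> bool" where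
  "hreduced p w \<longleftrightarrow> hred p w = w"

definition hmult :: "nat \<Rightarrow> hletter list \<Rightarrow> hletter list \<Rightarrow> hletter list" where
  "hmult p u v = foldr (hpush p) u v"

fun linv :: "nat \<Rightarrow> hletter \<Rightarrow> hletter" where
  "linv p Iota = Iota"
| "linv p (Gam k) = Gam ((p - k mod p) mod p)"

definition hinv :: "nat \<Rightarrow> hletter list \<Rightarrow> hletter list" where
  "hinv p w = hred p (rev (map (linv p) w))"

definition hconj :: "nat \<Rightarrow> hletter list \<Rightarrow> hletter list \<Rightarrow> bool" where
  "hconj p g g' \<longleftrightarrow> (\<exists>h. hreduced p h \<and> hmult p (hmult p h g) (hinv p h) = g')"

definition hreciprocal :: "nat \<Rightarrow> hletter list \<Rightarrow> bool" where
  "hreciprocal p g \<longleftrightarrow> hreduced p g \<and> g \<noteq> [] \<and> hconj p g (hinv p g)"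

definition hconjclass :: "nat \<Rightarrow> hletter list \<Rightarrow> hletter list set" where
  "hconjclass p g = {g'. hreduced p g' \<and> hconj p g g'}"

definition recip_classes :: "nat \<Rightarrow> hletter list set set" where
  "recip_classes p = {K. \<exists>g. hreduced p g \<and> K = hconjclass p g \<and> (\<exists>g'\<in>K. hreciprocal p g')}"

fun same_factor :: "hletter \<Rightarrow> hletter \<Rightarrow> bool" where
  "same_factor Iota Iota = True"
| "same_factor (Gam _) (Gam _) = True"
| "same_factor _ _ = False"

definition cyc_reduced :: "nat \<Rightarrow> hletter list \<Rightarrow> bool" where
  "cyc_reduced p w \<longleftrightarrow> hreduced p w \<and> (length w \<ge> 2 \<longrightarrow> \<not> same_factor (hd w) (last w))"

text \<open>Length: iota counts 1, gamma^k counts |k| with k taken in [-p/2, p/2].\<close>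
fun llen :: "nat \<Rightarrow> hletter \<Rightarrow> nat" where
  "llen p Iota = 1"
| "llen p (Gam k) = min (k mod p) (p - k mod p)"

definition wlen :: "nat \<Rightarrow> hletter list \<Rightarrow> nat" where
  "wlen p w = sum_list (map (llen p) w)"

definition class_len :: "nat \<Rightarrow> hletter list set \<Rightarrow> nat" where
  "class_len p K = Min (wlen p ` {w \<in> K. cyc_reduced p w})"

definition W :: "nat \<Rightarrow> real \<Rightarrow> hletter list set set" where
  "W p x = {K \<in> recip_classes p. real (class_len p K) \<le> x}"

end

theory Submission
  imports Defs
begin


definition vl :: "nat \<Rightarrow> hletter \<Rightarrow> bool" where
  "vl p x \<longleftrightarrow> (case x of Iota \<Rightarrow> True | Gam k \<Rightarrow> 0 < k \<and> k < p)"

definition nf :: "nat \<Rightarrow> hletter list \<Rightarrow> bool" where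
  "nf p w \<longleftrightarrow> (\<forall>x\<in>set w. vl p x) \<and> successively (\<lambda>x y. \<not> same_factor x y) w"

lemma vl_simps[simp]: "vl p Iota" "vl p (Gam k) \<longleftrightarrow> 0 < k \<and> k < p"
  by (auto simp: vl_def)

lemma nf_Nil[simp]: "nf p []" by (simp add: nf_def)

lemma nf_Cons: "nf p (x # w) \<longleftrightarrow> vl p x \<and> nf p w \<and> (w = [] \<or> \<not> same_factor x (hd w))"
  by (auto simp: nf_def successively_Cons)

lemma nf_append: "nf p (u @ v) \<longleftrightarrow> nf p u \<and> nf p v \<and> (u = [] \<or> v = [] \<or> \<not> same_factor (last u) (hd v))"
  by (auto simp: nf_def successively_append_iff)

lemma same_factor_sym: "same_factor x y = same_factor y x"
  by (cases x; cases y) auto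

lemma same_factor_Gam1[simp]: "same_factor (Gam a) x \<longleftrightarrow> x \<noteq> Iota"
  by (cases x) auto
lemma same_factor_Gam2[simp]: "same_factor x (Gam a) \<longleftrightarrow> x \<noteq> Iota"
  by (cases x) auto
lemma same_factor_Iota1[simp]: "same_factor Iota x \<longleftrightarrow> x = Iota"
  by (cases x) auto
lemma same_factor_Iota2[simp]: "same_factor x Iota \<longleftrightarrow> x = Iota"
  by (cases x) auto

lemma nf_hpush: "nf p w \<Longrightarrow> 0 < p \<Longrightarrow> nf p (hpush p x w)"
proof (cases x)
  case Iota
  assume "nf p w" "0 < p"
  then show ?thesis using Iota
  proof (cases w)
    case (Cons y w') then show ?thesis using Iota \<open>nf p w\<close> by (cases y; cases w') (auto simp: nf_Cons)
  qed (simp add: nf_Cons)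
next
  case (Gam k)
  assume a: "nf p w" "0 < p"
  show ?thesis
  proof (cases w)
    case Nil then show ?thesis using Gam a by (auto simp: nf_Cons)
  next
    case (Cons y w')
    show ?thesis
    proof (cases y)
      case Iota then show ?thesis using Gam a Cons by (auto simp: nf_Cons)
    next
      case (Gam j)
      then show ?thesis using \<open>x = Gam k\<close> a Cons
        by (cases w') (auto simp: nf_Cons)
    qed
  qed
qed

lemma nf_hred: "0 < p \<Longrightarrow> nf p (hred p w)"
  by (induction w) (auto simp: hred_def nf_hpush)

lemma hpush_nf_id: "hpush p x w = x # w" if "nf p (x # w)"
proof (cases w)
  case (Cons y w') then show ?thesis using that by (cases x; cases y) (auto simp: nf_Cons)
qed (use that in \<open>cases x, auto simp: nf_Cons\<close>)

lemma hred_nf: "nf p w \<Longrightarrow> hred p w = w"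
proof (induction w)
  case (Cons x w)
  then have "nf p w" by (simp add: nf_Cons)
  with Cons show ?case by (simp add: hred_def hpush_nf_id)
qed (simp add: hred_def)

lemma hreduced_iff: "0 < p \<Longrightarrow> hreduced p w \<longleftrightarrow> nf p w"
  using nf_hred hred_nf unfolding hreduced_def by metis

lemma hpush_mod: "hpush p (Gam k) w = hpush p (Gam (k mod p)) w"
proof (cases w)
  case (Cons y w') then show ?thesis by (cases y) (auto simp: mod_add_left_eq)
qed simp

lemma hpush_I_nI: "w = [] \<or> hd w \<noteq> Iota \<Longrightarrow> hpush p Iota w = Iota # w"
  by (cases w rule: list.exhaust; cases "hd w") auto

lemma hpush_G_I: "w = [] \<or> hd w = Iota \<Longrightarrow> hpush p (Gam k) w = (if k mod p = 0 then w else Gam (k mod p) # w)"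
  by (cases w rule: list.exhaust; cases "hd w") auto

lemma dvd_add_mod: "(p::nat) dvd c \<Longrightarrow> (a + c) mod p = a mod p"
  by (metis dvd_imp_mod_0 add_0_right mod_add_right_eq)

lemma hpush_Gam0: "nf p w \<Longrightarrow> k mod p = 0 \<Longrightarrow> hpush p (Gam k) w = w"
proof (cases w)
  case (Cons y w') assume "nf p w" "k mod p = 0" then show ?thesis using Cons
    by (cases y) (auto simp: nf_Cons)
qed simp

lemma hpush_II: "nf p w \<Longrightarrow> hpush p Iota (hpush p Iota w) = w"
proof (cases w)
  case (Cons y w') assume "nf p w" then show ?thesis using Cons
  proof (cases y)
    case Iota then show ?thesis using Cons \<open>nf p w\<close>
      by (cases w') (auto simp: nf_Cons hpush_I_nI)
  qed (use Cons in auto)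
qed simp

lemma hpush_GG: "nf p w \<Longrightarrow> 0 < p \<Longrightarrow> hpush p (Gam a) (hpush p (Gam b) w) = hpush p (Gam (a + b)) w"
proof (cases w)
  case Nil assume "0 < p" then show ?thesis using Nil by (auto simp: mod_add_right_eq)
next
  case (Cons y w') assume "nf p w" "0 < p" then show ?thesis using Cons
    by (cases y) (auto simp: nf_Cons mod_add_right_eq add.assoc hpush_G_I dvd_add_mod)
qed

lemma hpush_inv1: "nf p w \<Longrightarrow> 0 < p \<Longrightarrow> hpush p (linv p x) (hpush p x w) = w"
proof (cases x)
  case (Gam k) assume a: "nf p w" "0 < p"
  have "((p - k mod p) mod p + k) mod p = 0"
    by (metis a(2) add.commute le_add_diff_inverse mod_add_right_eq mod_le_divisor mod_self mod_add_left_eq)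
  then show ?thesis using a Gam by (simp add: hpush_GG hpush_Gam0)
qed (simp add: hpush_II)

lemma hpush_inv2: "nf p w \<Longrightarrow> 0 < p \<Longrightarrow> hpush p x (hpush p (linv p x) w) = w"
proof (cases x)
  case (Gam k) assume a: "nf p w" "0 < p"
  have "(k + (p - k mod p) mod p) mod p = 0"
    by (metis a(2) add.commute le_add_diff_inverse mod_add_right_eq mod_le_divisor mod_self mod_add_left_eq)
  then show ?thesis using a Gam by (simp add: hpush_GG hpush_Gam0)
qed (simp add: hpush_II)

lemma nf_foldr: "nf p w \<Longrightarrow> 0 < p \<Longrightarrow> nf p (foldr (hpush p) u w)"
  by (induction u) (auto simp: nf_hpush)

lemma foldr_hpush_step:
  assumes "nf p r" "nf p w" "0 < p"
  shows "foldr (hpush p) (hpush p x r) w = hpush p x (foldr (hpush p) r w)"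
proof (cases x)
  case Iota
  show ?thesis
  proof (cases r)
    case (Cons y r')
    show ?thesis
    proof (cases y)
      case Iota
      have "nf p (foldr (hpush p) r' w)" using assms Cons by (simp add: nf_foldr nf_Cons)
      then show ?thesis using \<open>x = Iota\<close> Cons Iota by (simp add: hpush_II)
    next
      case (Gam j) then show ?thesis using \<open>x = Iota\<close> Cons by simp
    qed
  qed (simp add: Iota)
next
  case (Gam k)
  show ?thesis
  proof (cases "r = [] \<or> hd r = Iota")
    case True
    have "nf p (foldr (hpush p) r w)" using assms by (simp add: nf_foldr)
    then show ?thesis using True Gam
      by (auto simp: hpush_G_I hpush_Gam0 hpush_mod[of p k])
  next
    case False
    then obtain j r' where r: "r = Gam j # r'" by (cases r; cases "hd r") auto
    have nr: "nf p (foldr (hpush p) r' w)" using assms r by (simp add: nf_foldr nf_Cons)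
    have "hpush p x (foldr (hpush p) r w) = hpush p (Gam (k + j)) (foldr (hpush p) r' w)"
      using r Gam nr assms by (simp add: hpush_GG)
    also have "\<dots> = hpush p (Gam ((k + j) mod p)) (foldr (hpush p) r' w)"
      by (rule hpush_mod)
    finally show ?thesis using r Gam nr by (auto simp: hpush_Gam0)
  qed
qed

lemma foldr_hred: "nf p w \<Longrightarrow> 0 < p \<Longrightarrow> foldr (hpush p) (hred p u) w = foldr (hpush p) u w"
proof (induction u)
  case (Cons x u)
  have "foldr (hpush p) (hred p (x # u)) w = foldr (hpush p) (hpush p x (hred p u)) w"
    by (simp add: hred_def)
  also have "\<dots> = hpush p x (foldr (hpush p) (hred p u) w)"
    using Cons by (simp add: foldr_hpush_step nf_hred)
  finally show ?case using Cons by simp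
qed (simp add: hred_def)

lemma hred_append: "hred p (u @ v) = foldr (hpush p) u (hred p v)"
  by (simp add: hred_def)

lemma hred_G1: "0 < p \<Longrightarrow> hred p (hred p u @ v) = hred p (u @ v)"
  by (simp add: hred_append foldr_hred nf_hred)

lemma hred_G2: "0 < p \<Longrightarrow> hred p (u @ hred p v) = hred p (u @ v)"
  by (simp add: hred_append hred_nf nf_hred)

lemma hred_idem: "0 < p \<Longrightarrow> hred p (hred p u) = hred p u"
  by (simp add: hred_nf nf_hred)

lemma hred_mid: "0 < p \<Longrightarrow> hred p (a @ hred p b @ c) = hred p (a @ b @ c)"
  by (metis hred_G1 hred_G2)

lemma hred_Cons: "hred p (x # u) = hpush p x (hred p u)"
  by (simp add: hred_def)

lemma hmult_eq: "nf p v \<Longrightarrow> hmult p u v = hred p (u @ v)"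
  by (simp add: hmult_def hred_append hred_nf)

abbreviation iv :: "nat \<Rightarrow> hletter list \<Rightarrow> hletter list" where
  "iv p u \<equiv> rev (map (linv p) u)"

lemma hred_iv_l: "0 < p \<Longrightarrow> hred p (iv p u @ u) = []"
proof (induction u)
  case (Cons x u)
  have "hred p (iv p (x # u) @ x # u) = foldr (hpush p) (iv p u) (hpush p (linv p x) (hpush p x (hred p u)))"
    by (simp add: hred_append hred_Cons)
  also have "\<dots> = foldr (hpush p) (iv p u) (hred p u)"
    using Cons by (simp add: hpush_inv1 nf_hred)
  finally show ?case using Cons by (simp add: hred_append)
qed (simp add: hred_def)

lemma hred_iv_r: "0 < p \<Longrightarrow> hred p (u @ iv p u) = []"
proof (induction u)
  case (Cons x u)
  have "hred p ((x # u) @ iv p (x # u)) = hpush p x (hred p ((u @ iv p u) @ [linv p x]))"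
    by (simp add: hred_Cons)
  also have "hred p ((u @ iv p u) @ [linv p x]) = hred p (hred p (u @ iv p u) @ [linv p x])"
    using Cons(2) by (metis hred_G1)
  also have "\<dots> = hpush p (linv p x) []" using Cons by (simp add: hred_def del: append_assoc)
  finally show ?case using Cons by (simp add: hpush_inv2)
qed (simp add: hred_def)

lemma hred_iv_hred: "0 < p \<Longrightarrow> hred p (iv p (hred p h)) = hred p (iv p h)"
proof -
  assume p: "0 < p"
  let ?A = "hred p h"
  have "hred p (iv p ?A) = hred p (iv p ?A @ hred p (h @ iv p h))" using p by (simp add: hred_iv_r)
  also have "\<dots> = hred p (hred p (iv p ?A @ h) @ iv p h)" using p by (simp add: hred_G1 hred_G2)
  also have "hred p (iv p ?A @ h) = hred p (iv p ?A @ ?A)" using p by (simp add: hred_G2)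
  also have "\<dots> = []" using p by (simp add: hred_iv_l)
  finally show ?thesis by (simp add: hred_def)
qed

definition vls :: "nat \<Rightarrow> hletter list \<Rightarrow> bool" where
  "vls p h \<longleftrightarrow> (\<forall>x\<in>set h. vl p x)"

definition cj :: "nat \<Rightarrow> hletter list \<Rightarrow> hletter list \<Rightarrow> bool" where
  "cj p g w \<longleftrightarrow> (\<exists>h. vls p h \<and> w = hred p (h @ g @ iv p h))"

lemma linv_Gam: "0 < k \<Longrightarrow> k < p \<Longrightarrow> linv p (Gam k) = Gam (p - k)"
  by simp

lemma vl_linv: "vl p x \<Longrightarrow> vl p (linv p x)"
  by (cases x) auto

lemma linv_linv: "vl p x \<Longrightarrow> linv p (linv p x) = x"
  by (cases x) auto

lemma vls_iv: "vls p h \<Longrightarrow> vls p (iv p h)"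
  by (auto simp: vls_def vl_linv)

lemma iv_iv: "vls p h \<Longrightarrow> iv p (iv p h) = h"
  by (induction h) (auto simp: vls_def linv_linv)

lemma vls_append[simp]: "vls p (a @ b) \<longleftrightarrow> vls p a \<and> vls p b"
  by (auto simp: vls_def)

lemma nf_vls: "nf p w \<Longrightarrow> vls p w"
  by (simp add: nf_def vls_def)

lemma hconj_iff: assumes "nf p g" "0 < p" shows "hconj p g w \<longleftrightarrow> cj p g w"
proof
  assume "hconj p g w"
  then obtain h where h: "hreduced p h" "hmult p (hmult p h g) (hinv p h) = w"
    by (auto simp: hconj_def)
  have "nf p h" using h(1) assms by (simp add: hreduced_iff)
  have "w = hred p (hred p (h @ g) @ hred p (iv p h))"
    using h(2) assms by (simp add: hmult_eq hinv_def nf_hred)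
  also have "\<dots> = hred p (h @ g @ iv p h)" using assms by (simp add: hred_G1 hred_G2)
  finally show "cj p g w" using \<open>nf p h\<close> nf_vls unfolding cj_def by blast
next
  assume "cj p g w"
  then obtain h where h: "vls p h" "w = hred p (h @ g @ iv p h)" by (auto simp: cj_def)
  let ?h = "hred p h"
  have "hmult p (hmult p ?h g) (hinv p ?h) = hred p (hred p (?h @ g) @ hred p (iv p ?h))"
    using assms by (simp add: hmult_eq hinv_def nf_hred)
  also have "\<dots> = hred p ((h @ g) @ hred p (iv p ?h))" using assms by (simp add: hred_G1)
  also have "\<dots> = hred p ((h @ g) @ hred p (iv p h))" using assms by (simp add: hred_iv_hred)
  also have "\<dots> = w" using assms h hred_G2[of p "h @ g" "iv p h"] by simp
  moreover have "hreduced p ?h" using assms by (simp add: hreduced_def hred_idem)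
  ultimately show "hconj p g w" unfolding hconj_def by blast
qed

lemma cj_nf: "cj p g w \<Longrightarrow> 0 < p \<Longrightarrow> nf p w"
  by (auto simp: cj_def nf_hred)

lemma cj_refl: "nf p g \<Longrightarrow> cj p g g"
  unfolding cj_def by (rule exI[of _ "[]"]) (simp add: vls_def hred_nf)

lemma cj_trans: assumes "cj p a b" "cj p b c" "0 < p" shows "cj p a c"
proof -
  obtain h1 where h1: "vls p h1" "b = hred p (h1 @ a @ iv p h1)" using assms by (auto simp: cj_def)
  obtain h2 where h2: "vls p h2" "c = hred p (h2 @ b @ iv p h2)" using assms by (auto simp: cj_def)
  have "c = hred p ((h2 @ h1) @ a @ iv p (h2 @ h1))"
    using h1 h2 assms by (simp add: hred_mid)
  then show ?thesis using h1 h2 unfolding cj_def by (metis vls_append)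
qed

lemma cj_sym: assumes "cj p a b" "nf p a" "0 < p" shows "cj p b a"
proof -
  obtain h where h: "vls p h" "b = hred p (h @ a @ iv p h)" using assms by (auto simp: cj_def)
  have "hred p (iv p h @ b @ iv p (iv p h)) = hred p (iv p h @ h @ a @ iv p h @ h)"
    using h assms by (simp add: hred_mid iv_iv)
  also have "\<dots> = hred p (hred p (iv p h @ h) @ a @ hred p (iv p h @ h))"
    using assms hred_G1[of p "iv p h @ h" "a @ hred p (iv p h @ h)"]
      hred_G2[of p "iv p h @ h @ a" "iv p h @ h"] by simp
  also have "\<dots> = a" using assms by (simp add: hred_iv_l hred_nf)
  finally show ?thesis using h unfolding cj_def by (metis vls_iv)
qed

lemma hconjclass_eq: "nf p g \<Longrightarrow> 0 < p \<Longrightarrow> hconjclass p g = {w. cj p g w}"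
  by (auto simp: hconjclass_def hconj_iff hreduced_iff cj_nf)



function cr :: "nat \<Rightarrow> hletter list \<Rightarrow> hletter list" where
  "cr p w = (if 2 \<le> length w \<and> same_factor (hd w) (last w) then
     (case (hd w, last w) of
        (Iota, _) \<Rightarrow> cr p (butlast (tl w))
      | (Gam a, Gam b) \<Rightarrow> (if (a + b) mod p = 0 then cr p (butlast (tl w))
                          else butlast (tl w) @ [Gam ((a + b) mod p)])
      | _ \<Rightarrow> w)
     else w)"
  by pat_completeness auto
termination by (relation "measure (\<lambda>(p, w). length w)") auto

declare cr.simps[simp del]

lemma cr_II[simp]: "cr p (Iota # m @ [Iota]) = cr p m"
  by (subst cr.simps) simp

lemma cr_GG[simp]: "cr p (Gam a # m @ [Gam b]) = (if (a + b) mod p = 0 then cr p m else m @ [Gam ((a + b) mod p)])"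
  by (subst cr.simps) simp

lemma cr_id: "\<not> (2 \<le> length w \<and> same_factor (hd w) (last w)) \<Longrightarrow> cr p w = w"
  apply (subst cr.simps) apply (rule if_not_P) apply assumption done

definition cc :: "hletter list \<Rightarrow> bool" where
  "cc w \<longleftrightarrow> (2 \<le> length w \<longrightarrow> \<not> same_factor (hd w) (last w))"

lemma cyc_reduced_iff: "0 < p \<Longrightarrow> cyc_reduced p w \<longleftrightarrow> nf p w \<and> cc w"
  by (simp add: cyc_reduced_def hreduced_iff cc_def)

lemma cr_cc_id: "cc w \<Longrightarrow> cr p w = w"
  by (simp add: cc_def cr_id)

lemma split3: "2 \<le> length w \<Longrightarrow> w = hd w # butlast (tl w) @ [last w]"
  by (cases w) (auto simp: butlast_append last_tl)

lemma split3E: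
  assumes "2 \<le> length w"
  obtains x m y where "w = x # m @ [y]"
  using split3[OF assms] by blast

lemma nf_mid: "nf p (x # m @ [y]) \<Longrightarrow> nf p m \<and> (m \<noteq> [] \<longrightarrow> \<not> same_factor x (hd m) \<and> \<not> same_factor (last m) y)
   \<and> vl p x \<and> vl p y \<and> (m = [] \<longrightarrow> \<not> same_factor x y)"
  by (auto simp: nf_Cons nf_append)

lemma cr_nf_cc: "nf p w \<Longrightarrow> 0 < p \<Longrightarrow> nf p (cr p w) \<and> cc (cr p w)"
proof (induction p w rule: cr.induct)
  case (1 p w)
  show ?case
  proof (cases "2 \<le> length w \<and> same_factor (hd w) (last w)")
    case False then show ?thesis using 1 by (simp add: cr_id cc_def)
  next
    case True
    then obtain x m y where w: "w = x # m @ [y]" by (meson split3E)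
    have nm: "nf p m" using nf_mid "1.prems" w by blast
    show ?thesis
    proof (cases x)
      case Iota
      then have "y = Iota" using True w by simp
      then show ?thesis using 1 w Iota nm True by simp
    next
      case (Gam a)
      then obtain b where y: "y = Gam b" using True w by (cases y) auto
      show ?thesis
      proof (cases "(a + b) mod p = 0")
        case True
        then show ?thesis using 1 w Gam y nm \<open>2 \<le> length w \<and> _\<close> by simp
      next
        case False
        have "m \<noteq> [] \<longrightarrow> hd m = Iota \<and> last m = Iota" using nf_mid[of p x m y] "1.prems" w Gam y by auto
        then show ?thesis using False w Gam y nm 1
          by (cases "m = []") (auto simp: nf_append cc_def nf_Cons)
      qed
    qed
  qed
qed

lemma hred_cancel1: "0 < p \<Longrightarrow> hred p (a @ linv p x # x # b) = hred p (a @ b)"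
  by (simp add: hred_append hred_Cons hpush_inv1 nf_hred)

lemma hred_cancel2: "0 < p \<Longrightarrow> hred p (a @ x # linv p x # b) = hred p (a @ b)"
  by (simp add: hred_append hred_Cons hpush_inv2 nf_hred)

lemma hred_GG2: "0 < p \<Longrightarrow> nf p (m @ [Gam b]) \<Longrightarrow> vl p (Gam a) \<Longrightarrow>
   hred p (m @ [Gam b, Gam a]) = (if (a + b) mod p = 0 then m else m @ [Gam ((a + b) mod p)])"
proof -
  assume a: "0 < p" "nf p (m @ [Gam b])" "vl p (Gam a)"
  have nm: "nf p m" using a(2) by (simp add: nf_append)
  have "hred p (m @ [Gam b, Gam a]) = foldr (hpush p) m (hred p [Gam b, Gam a])"
    by (simp only: hred_append)
  also have "hred p [Gam b, Gam a] = hpush p (Gam b) [Gam a]"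
    using a by (simp add: hred_def)
  also have "hpush p (Gam b) [Gam a] = (if (a + b) mod p = 0 then [] else [Gam ((a + b) mod p)])"
    by (simp add: add.commute)
  also have "foldr (hpush p) m \<dots> = hred p (m @ (if (a + b) mod p = 0 then [] else [Gam ((a + b) mod p)]))"
    using a by (simp add: hred_append hred_nf nf_Cons)
  also have "\<dots> = (if (a + b) mod p = 0 then m else m @ [Gam ((a + b) mod p)])"
    using a nm by (auto intro!: hred_nf simp: nf_append nf_Cons)
  finally show ?thesis .
qed

lemma cj_cr: "nf p w \<Longrightarrow> 0 < p \<Longrightarrow> cj p w (cr p w)"
proof (induction p w rule: cr.induct)
  case (1 p w)
  show ?case
  proof (cases "2 \<le> length w \<and> same_factor (hd w) (last w)")
    case False then show ?thesis using 1 by (simp add: cr_id cj_refl)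
  next
    case True
    then obtain x m y where w: "w = x # m @ [y]" by (meson split3E)
    have nm: "nf p m" using nf_mid "1.prems" w by blast
    show ?thesis
    proof (cases x)
      case Iota
      then have y: "y = Iota" using True w by simp
      have "hred p ([Iota] @ w @ iv p [Iota]) = hred p ([] @ m)"
        using w Iota y hred_cancel1[of p "[]" Iota "m @ [Iota, Iota]"] hred_cancel1[of p m Iota "[]"] "1.prems"
        by simp
      then have "cj p w m" using nm "1.prems" unfolding cj_def
        by (metis append_Nil hred_nf vls_def list.set vl_simps(1) empty_iff set_ConsD)
      moreover have "cj p m (cr p m)" using 1 w Iota True nm by simp
      ultimately show ?thesis using w Iota y cj_trans "1.prems" by auto
    next
      case (Gam a)
      then obtain b where y: "y = Gam b" using True w by (cases y) auto
      have va: "vl p (Gam a)" using "1.prems" w Gam by (simp add: nf_Cons)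
      have e: "hred p ([linv p (Gam a)] @ w @ iv p [linv p (Gam a)]) = hred p (m @ [Gam b, Gam a])"
        using w Gam y hred_cancel1[of p "[]" "Gam a" "m @ [Gam b, Gam a]"] "1.prems" va
        by (simp add: linv_linv del: linv.simps)
      have nmb: "nf p (m @ [Gam b])" using "1.prems" w Gam y by (simp add: nf_Cons)
      have cjw: "cj p w (hred p (m @ [Gam b, Gam a]))"
        unfolding cj_def using e va vl_linv by (metis vls_def list.set empty_iff set_ConsD)
      show ?thesis
      proof (cases "(a + b) mod p = 0")
        case True
        then have "cj p w m" using cjw hred_GG2[OF "1.prems"(2) nmb va] by simp
        moreover have "cj p m (cr p m)" using 1 w Gam y True nm \<open>2 \<le> length w \<and> _\<close> by simp
        ultimately show ?thesis using w Gam y True cj_trans "1.prems" by auto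
      next
        case False
        then show ?thesis using cjw hred_GG2[OF "1.prems"(2) nmb va] w Gam y by simp
      qed
    qed
  qed
qed



declare hd_append[simp]

definition roteq :: "'a list \<Rightarrow> 'a list \<Rightarrow> bool" where
  "roteq a b \<longleftrightarrow> (\<exists>n. b = rotate n a)"

lemma roteq_refl[simp]: "roteq a a"
  unfolding roteq_def by (metis rotate0 id_apply)

lemma roteq_trans: "roteq a b \<Longrightarrow> roteq b c \<Longrightarrow> roteq a c"
  unfolding roteq_def by (metis rotate_rotate)

lemma roteq_sym: "roteq a b \<Longrightarrow> roteq b a"
proof -
  assume "roteq a b"
  then obtain n where b: "b = rotate n a" by (auto simp: roteq_def)
  show ?thesis
  proof (cases "a = []")
    case True then show ?thesis using b by simp
  next
    case False
    have "rotate (length a - n mod length a) b = rotate ((length a - n mod length a) + n) a"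
      using b by (simp add: rotate_rotate)
    also have "\<dots> = a"
    proof (rule rotate_id)
      have "(length a - n mod length a + n) mod length a = (length a - n mod length a + n mod length a) mod length a"
        by (metis mod_add_right_eq)
      also have "\<dots> = 0" using False by simp
      finally show "(length a - n mod length a + n) mod length a = 0" .
    qed
    finally show ?thesis unfolding roteq_def by metis
  qed
qed

lemma roteq_rot1: "roteq (x # m) (m @ [x])"
  unfolding roteq_def by (metis rotate1.simps(2) rotate_Suc rotate0 id_apply)

lemma roteq_rot1': "roteq (m @ [x]) (x # m)"
  using roteq_rot1 roteq_sym by metis

lemma mod2: "(x::nat) < 2 * p \<Longrightarrow> x mod p = (if x < p then x else x - p)"
  by (simp add: le_mod_geq)

lemma hred_Nil[simp]: "hred p [] = []" by (simp add: hred_def)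

lemma hred_nf_id: "nf p w \<Longrightarrow> hred p w = w" by (rule hred_nf)

lemma letter_conj_Iota:
  assumes "nf p w" "0 < p"
  shows "roteq (cr p w) (cr p (hred p (Iota # w @ [Iota])))"
proof -
  consider "w = []" | z where "w = [z]" | y m z where "w = y # m @ [z]"
  proof (cases "2 \<le> length w")
    case True then show ?thesis using that(3) by (meson split3E)
  next
    case False then show ?thesis using that(1,2) by (cases w; cases "tl w") auto
  qed
  then show ?thesis
  proof cases
    case 1 then show ?thesis using assms hred_cancel1[of p "[]" Iota "[]"] by simp
  next
    case (2 z)
    show ?thesis
    proof (cases z)
      case Iota then show ?thesis using 2 assms hred_cancel1[of p "[]" Iota "[Iota]"] by (simp add: hred_nf nf_Cons)
    next
      case (Gam a)
      have "nf p [Iota, Gam a, Iota]" using assms 2 Gam by (simp add: nf_Cons)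
      then show ?thesis using 2 Gam cr_II[of p "[Gam a]"] by (simp add: hred_nf)
    qed
  next
    case (3 y m z)
    have nm: "nf p m" using nf_mid assms 3 by blast
    show ?thesis
    proof (cases y; cases z)
      assume yz: "y = Iota" "z = Iota"
      have "hred p (Iota # w @ [Iota]) = m"
        using 3 yz assms hred_cancel1[of p "[]" Iota "m @ [Iota, Iota]"] hred_cancel1[of p m Iota "[]"] nm
        by (simp add: hred_nf)
      then show ?thesis using 3 yz by simp
    next
      fix b assume yz: "y = Iota" "z = Gam b"
      have n2: "nf p (m @ [Gam b, Iota])" using assms 3 yz by (auto simp: nf_Cons nf_append)
      have "hred p (Iota # w @ [Iota]) = m @ [Gam b, Iota]"
        using 3 yz assms hred_cancel1[of p "[]" Iota "m @ [Gam b, Iota]"] n2 by (simp add: hred_nf)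
      moreover have "cc (m @ [Gam b, Iota])" using assms 3 yz by (cases m) (auto simp: cc_def nf_Cons)
      moreover have "cc w" using 3 yz by (simp add: cc_def)
      ultimately show ?thesis using 3 yz roteq_rot1[of Iota "m @ [Gam b]"] by (simp add: cr_cc_id)
    next
      fix a assume yz: "y = Gam a" "z = Iota"
      have n2: "nf p (Iota # Gam a # m)" using assms 3 yz by (cases m) (auto simp: nf_Cons nf_append)
      have "hred p (Iota # w @ [Iota]) = Iota # Gam a # m"
        using 3 yz assms hred_cancel1[of p "Iota # Gam a # m" Iota "[]"] n2 by (simp add: hred_nf)
      moreover have "cc (Iota # Gam a # m)"
        using assms 3 yz nf_mid[of p "Gam a" m Iota] by (cases m rule: rev_cases) (auto simp: cc_def)
      moreover have "cc w" using 3 yz by (simp add: cc_def)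
      ultimately show ?thesis using 3 yz roteq_rot1'[of "Gam a # m" Iota] by (simp add: cr_cc_id)
    next
      fix a b assume yz: "y = Gam a" "z = Gam b"
      have n2: "nf p (Iota # w @ [Iota])" using assms 3 yz by (cases m) (auto simp: nf_Cons nf_append)
      then show ?thesis using 3 yz by (simp add: hred_nf del: append_Cons)
    qed
  qed
qed



lemma modfacts:
  fixes a b k p :: nat
  assumes "0 < a" "a < p" "0 < b" "b < p" "0 < k" "k < p"
  shows "((k + a) mod p + (p - k + b) mod p) mod p = (a + b) mod p"
    "(k + a) mod p = 0 \<Longrightarrow> (p - k + b) mod p = (a + b) mod p"
    "(p - k + b) mod p = 0 \<Longrightarrow> (k + a) mod p = (a + b) mod p"
    "(p - k + b) mod p = 0 \<longleftrightarrow> b = k"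
    "(k + (p - k + b) mod p) mod p = b"
    "(k + a) mod p = 0 \<longleftrightarrow> a = p - k"
    "((k + a) mod p + (p - k)) mod p = a"
proof -
  define c1 where "c1 = (k + a) mod p"
  define c2 where "c2 = (p - k + b) mod p"
  define s where "s = (a + b) mod p"
  have h1: "c1 = (if k + a < p then k + a else k + a - p)" unfolding c1_def using assms by (intro mod2) simp
  have h2: "c2 = (if p - k + b < p then p - k + b else p - k + b - p)" unfolding c2_def using assms by (intro mod2) simp
  have h3: "s = (if a + b < p then a + b else a + b - p)" unfolding s_def using assms by (intro mod2) simp
  have lt: "c1 < p" "c2 < p" using assms unfolding c1_def c2_def by simp_all
  have h4: "(c1 + c2) mod p = (if c1 + c2 < p then c1 + c2 else c1 + c2 - p)" using lt by (intro mod2) simp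
  have h5: "(k + c2) mod p = (if k + c2 < p then k + c2 else k + c2 - p)" using lt assms by (intro mod2) simp
  have h6: "(c1 + (p - k)) mod p = (if c1 + (p - k) < p then c1 + (p - k) else c1 + (p - k) - p)" using lt assms by (intro mod2) simp
  show "((k + a) mod p + (p - k + b) mod p) mod p = (a + b) mod p"
    unfolding c1_def[symmetric] c2_def[symmetric] s_def[symmetric] h4 using h1 h2 h3 assms by (simp split: if_split_asm) 
  show "(k + a) mod p = 0 \<Longrightarrow> (p - k + b) mod p = (a + b) mod p"
    unfolding c1_def[symmetric] c2_def[symmetric] s_def[symmetric] using h1 h2 h3 assms by (simp split: if_split_asm)
  show "(p - k + b) mod p = 0 \<Longrightarrow> (k + a) mod p = (a + b) mod p"
    unfolding c1_def[symmetric] c2_def[symmetric] s_def[symmetric] using h1 h2 h3 assms by (simp split: if_split_asm)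
  show "(p - k + b) mod p = 0 \<longleftrightarrow> b = k"
    unfolding c2_def[symmetric] using h2 assms by (auto split: if_split_asm)
  show "(k + (p - k + b) mod p) mod p = b"
    unfolding c2_def[symmetric] h5 using h2 assms by (simp split: if_split_asm)
  show "(k + a) mod p = 0 \<longleftrightarrow> a = p - k"
    unfolding c1_def[symmetric] using h1 assms by (auto split: if_split_asm)
  show "((k + a) mod p + (p - k)) mod p = a"
    unfolding c1_def[symmetric] h6 using h1 assms by (simp split: if_split_asm)
qed

lemma modfacts2: "0 < k \<Longrightarrow> k < (p::nat) \<Longrightarrow> (k + (p - k)) mod p = 0"
  "0 < k \<Longrightarrow> k < (p::nat) \<Longrightarrow> a < p \<Longrightarrow> (k + a + (p - k)) mod p = a"
proof -
  assume "0 < k" "k < p"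
  then show "(k + (p - k)) mod p = 0" by simp
  assume "a < p"
  have "k + a + (p - k) = a + p" using \<open>k < p\<close> by simp
  then show "(k + a + (p - k)) mod p = a" using \<open>a < p\<close> by simp
qed



lemma letter_conj_Gam:
  assumes "nf p w" "0 < k" "k < p"
  shows "roteq (cr p w) (cr p (hred p (Gam k # w @ [Gam (p - k)])))"
proof -
  have p: "0 < p" using assms by simp
  have vk: "vl p (Gam (p - k))" using assms by simp
  consider "w = []" | z where "w = [z]" | y m z where "w = y # m @ [z]"
  proof (cases "2 \<le> length w")
    case True then show ?thesis using that(3) by (meson split3E)
  next
    case False then show ?thesis using that(1,2) by (cases w; cases "tl w") auto
  qed
  then show ?thesis
  proof cases
    case 1
    have "hred p [Gam k, Gam (p - k)] = []"
      using hred_cancel2[of p "[]" "Gam k" "[]"] p assms by simp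
    then show ?thesis using 1 by simp
  next
    case (2 z)
    show ?thesis
    proof (cases z)
      case Iota
      have "nf p [Gam k, Iota, Gam (p - k)]" using assms by (simp add: nf_Cons)
      then show ?thesis using 2 Iota cr_GG[of p k "[Iota]" "p - k"] modfacts2[OF assms(2,3)]
        by (simp add: hred_nf)
    next
      case (Gam a)
      have a: "0 < a" "a < p" using assms 2 Gam by (auto simp: nf_Cons)
      have "hred p [Gam k, Gam a, Gam (p - k)] = hpush p (Gam k) (hpush p (Gam a) [Gam (p - k)])"
        using vk by (simp add: hred_def)
      also have "\<dots> = hpush p (Gam (k + a)) [Gam (p - k)]"
        by (rule hpush_GG) (use vk p in \<open>simp_all add: nf_Cons\<close>)
      also have "\<dots> = hpush p (Gam (k + a)) (hpush p (Gam (p - k)) [])" using assms by simp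
      also have "\<dots> = hpush p (Gam (k + a + (p - k))) []"
        by (rule hpush_GG) (use p in simp_all)
      also have "\<dots> = [Gam a]" using modfacts2(2)[OF assms(2,3) a(2)] a by simp
      finally show ?thesis using 2 Gam by simp
    qed
  next
    case (3 y m z)
    have nm: "nf p m" using nf_mid assms 3 by blast
    have vy: "vl p y" "vl p z" using nf_mid assms(1) 3 by blast+
    show ?thesis
    proof (cases y; cases z)
      assume yz: "y = Iota" "z = Iota"
      have "nf p (Gam k # w @ [Gam (p - k)])" using assms 3 yz by (cases m) (auto simp: nf_Cons nf_append)
      then show ?thesis using 3 yz cr_GG[of p k "Iota # m @ [Iota]" "p - k"] modfacts2[OF assms(2,3)]
        by (simp add: hred_nf)
    next
      fix b assume yz: "y = Iota" "z = Gam b"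
      have b: "0 < b" "b < p" using vy yz by auto
      have nmb: "nf p ((Iota # m) @ [Gam b])" using assms 3 yz by simp
      have "hred p (Gam k # w @ [Gam (p - k)]) = hpush p (Gam k) (hred p ((Iota # m) @ [Gam b, Gam (p - k)]))"
        using 3 yz by (simp add: hred_Cons)
      also have "hred p ((Iota # m) @ [Gam b, Gam (p - k)]) =
          (if (p - k + b) mod p = 0 then Iota # m else (Iota # m) @ [Gam ((p - k + b) mod p)])"
        using hred_GG2[OF p nmb vk] by simp
      finally have e: "hred p (Gam k # w @ [Gam (p - k)]) =
          (if (p - k + b) mod p = 0 then Gam k # Iota # m else Gam k # Iota # m @ [Gam ((p - k + b) mod p)])"
        using assms by (simp add: hpush_G_I)
      have ccw: "cc w" using 3 yz by (simp add: cc_def)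
      show ?thesis
      proof (cases "(p - k + b) mod p = 0")
        case True
        then have "b = k" using modfacts(4)[OF b b assms(2,3)] by simp
        have "m \<noteq> [] \<Longrightarrow> last m = Iota" using nf_mid[of p Iota m "Gam b"] assms 3 yz by auto
        then have "cc (Gam k # Iota # m)" by (cases m rule: rev_cases) (auto simp: cc_def)
        then show ?thesis using e True ccw cr_cc_id 3 yz \<open>b = k\<close> roteq_rot1'[of "Iota # m" "Gam b"] by simp
      next
        case False
        then show ?thesis using e ccw cr_cc_id[OF ccw] 3 yz cr_GG[of p k "Iota # m" "(p - k + b) mod p"]
          modfacts(5)[OF b b assms(2,3)] b by simp
      qed
    next
      fix a assume yz: "y = Gam a" "z = Iota"
      have a: "0 < a" "a < p" using vy yz by auto
      have n2: "nf p (Gam a # m @ [Iota, Gam (p - k)])" using assms 3 yz by (cases m) (auto simp: nf_Cons nf_append split: if_splits)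
      have e: "hred p (Gam k # w @ [Gam (p - k)]) = (if (k + a) mod p = 0 then m @ [Iota, Gam (p - k)]
          else Gam ((k + a) mod p) # m @ [Iota, Gam (p - k)])"
      proof -
        have "hred p (Gam k # w @ [Gam (p - k)]) = hpush p (Gam k) (Gam a # m @ [Iota, Gam (p - k)])"
          using 3 yz hred_Cons[of p "Gam k" "Gam a # m @ [Iota, Gam (p - k)]"] hred_nf[OF n2] by simp
        then show ?thesis by simp
      qed
      have ccw: "cc w" using 3 yz by (simp add: cc_def)
      have r: "roteq w ((m @ [Iota]) @ [Gam a])" using 3 yz roteq_rot1[of "Gam a" "m @ [Iota]"] by simp
      have hm: "m \<noteq> [] \<Longrightarrow> hd m = Iota" using assms 3 yz by (cases m) (auto simp: nf_Cons)
      have ccr: "cc ((m @ [Iota]) @ [Gam a])" using hm by (cases m) (auto simp: cc_def)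
      show ?thesis
      proof (cases "(k + a) mod p = 0")
        case True
        then have "a = p - k" using modfacts(6)[OF a a assms(2,3)] by simp
        then show ?thesis using e True r ccr ccw cr_cc_id by (metis append.assoc append_Cons append_Nil)
      next
        case False
        have "cr p (hred p (Gam k # w @ [Gam (p - k)])) = (m @ [Iota]) @ [Gam a]"
          using e False cr_GG[of p "(k + a) mod p" "m @ [Iota]" "p - k"] modfacts(7)[OF a a assms(2,3)] a
          by simp
        then show ?thesis using r cr_cc_id[OF ccw] by simp
      qed
    next
      fix a b assume yz: "y = Gam a" "z = Gam b"
      have a: "0 < a" "a < p" "0 < b" "b < p" using vy yz by auto
      have mne: "m \<noteq> []" using assms 3 yz by (auto simp: nf_Cons)
      have hm: "hd m = Iota" "last m = Iota" using nf_mid[of p "Gam a" m "Gam b"] assms 3 yz mne by auto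
      have nmb: "nf p (m @ [Gam b])" using assms 3 yz by (simp add: nf_Cons)
      define c1 where "c1 = (k + a) mod p"
      define c2 where "c2 = (p - k + b) mod p"
      define R where "R = (if c2 = 0 then m else m @ [Gam c2])"
      have R: "hred p (m @ [Gam b, Gam (p - k)]) = R"
        using hred_GG2[OF p nmb vk] unfolding R_def c2_def by simp
      have hR: "hd R = Iota" "R \<noteq> []" using hm mne unfolding R_def by auto
      have e: "hred p (Gam k # w @ [Gam (p - k)]) = (if c1 = 0 then R else Gam c1 # R)"
        using 3 yz R hR a unfolding c1_def by (simp add: hred_Cons hpush_G_I)
      have F: "(c1 + c2) mod p = (a + b) mod p" "c1 = 0 \<Longrightarrow> c2 = (a + b) mod p"
        "c2 = 0 \<Longrightarrow> c1 = (a + b) mod p"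
        using modfacts(1,2,3)[OF a assms(2,3)] unfolding c1_def c2_def by auto
      have crw: "cr p w = (if (a + b) mod p = 0 then cr p m else m @ [Gam ((a + b) mod p)])"
        using 3 yz by simp
      show ?thesis
      proof (cases "c1 = 0"; cases "c2 = 0")
        assume c: "c1 = 0" "c2 = 0"
        then show ?thesis using e crw F unfolding R_def by simp
      next
        assume c: "c1 = 0" "c2 \<noteq> 0"
        have "cc (m @ [Gam c2])" using hm by (auto simp: cc_def)
        then show ?thesis using e crw F c cr_cc_id unfolding R_def by simp
      next
        assume c: "c1 \<noteq> 0" "c2 = 0"
        have "cc (Gam c1 # m)" using hm mne by (cases m rule: rev_cases) (auto simp: cc_def)
        then show ?thesis using e crw F c cr_cc_id roteq_rot1' unfolding R_def by simp
      next
        assume c: "c1 \<noteq> 0" "c2 \<noteq> 0"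
        then show ?thesis using e crw F unfolding R_def by simp
      qed
    qed
  qed
qed



lemma letter_conj:
  assumes "nf p w" "vl p x" "0 < p"
  shows "roteq (cr p w) (cr p (hred p (x # w @ [linv p x])))"
proof (cases x)
  case Iota then show ?thesis using letter_conj_Iota assms by simp
next
  case (Gam k)
  then have "0 < k" "k < p" using assms by auto
  then show ?thesis using letter_conj_Gam[OF assms(1)] Gam by simp
qed

lemma cj_inv_aux: "vls p h \<Longrightarrow> nf p g \<Longrightarrow> 0 < p \<Longrightarrow> roteq (cr p g) (cr p (hred p (h @ g @ iv p h)))"
proof (induction h)
  case Nil then show ?case by (simp add: hred_nf)
next
  case (Cons x h)
  have vx: "vl p x" "vls p h" using Cons.prems by (auto simp: vls_def)
  have "hred p ((x # h) @ g @ iv p (x # h)) = hred p ([x] @ hred p (h @ g @ iv p h) @ [linv p x])"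
    using Cons.prems hred_mid[of p "[x]" "h @ g @ iv p h" "[linv p x]"] by simp
  then have "roteq (cr p (hred p (h @ g @ iv p h))) (cr p (hred p ((x # h) @ g @ iv p (x # h))))"
    using letter_conj[OF nf_hred[OF Cons.prems(3), of "h @ g @ iv p h"] vx(1) Cons.prems(3)] by simp
  then show ?case using Cons vx roteq_trans by blast
qed

lemma cj_inv: "cj p g w \<Longrightarrow> nf p g \<Longrightarrow> 0 < p \<Longrightarrow> roteq (cr p g) (cr p w)"
  unfolding cj_def using cj_inv_aux by blast

lemma sum_list_rotate: "sum_list (rotate n (xs :: nat list)) = sum_list xs"
proof -
  have "sum_list xs = sum_list (take (n mod length xs) xs @ drop (n mod length xs) xs)" by simp
  then show ?thesis by (simp only: rotate_drop_take sum_list_append)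
qed

lemma wlen_rotate: "wlen p (rotate n xs) = wlen p xs"
  unfolding wlen_def by (metis rotate_map sum_list_rotate)

lemma wlen_roteq: "roteq a b \<Longrightarrow> wlen p a = wlen p b"
  unfolding roteq_def using wlen_rotate by metis

lemma class_members: assumes "nf p g" "0 < p"
  shows "{w \<in> hconjclass p g. cyc_reduced p w} \<noteq> {}"
    "\<And>w. w \<in> hconjclass p g \<Longrightarrow> cyc_reduced p w \<Longrightarrow> roteq (cr p g) w"
    "cr p g \<in> hconjclass p g" "cyc_reduced p (cr p g)"
proof -
  show c: "cr p g \<in> hconjclass p g" using assms cj_cr by (simp add: hconjclass_eq)
  show d: "cyc_reduced p (cr p g)" using cr_nf_cc assms by (simp add: cyc_reduced_iff)
  show "{w \<in> hconjclass p g. cyc_reduced p w} \<noteq> {}" using c d by blast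
  fix w assume "w \<in> hconjclass p g" "cyc_reduced p w"
  then have "cj p g w" "cc w" using assms by (auto simp: hconjclass_eq cyc_reduced_iff)
  then show "roteq (cr p g) w" using cj_inv assms cr_cc_id by metis
qed

lemma class_len_eq: assumes "nf p g" "0 < p"
  shows "class_len p (hconjclass p g) = wlen p (cr p g)"
proof -
  have "wlen p ` {w \<in> hconjclass p g. cyc_reduced p w} = {wlen p (cr p g)}"
  proof
    show "wlen p ` {w \<in> hconjclass p g. cyc_reduced p w} \<subseteq> {wlen p (cr p g)}"
      using class_members(2)[OF assms] wlen_roteq by fastforce
    show "{wlen p (cr p g)} \<subseteq> wlen p ` {w \<in> hconjclass p g. cyc_reduced p w}"
      using class_members(3,4)[OF assms] by blast
  qed
  then show ?thesis by (simp add: class_len_def)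
qed



lemma same_factor_linv: "same_factor (linv p x) (linv p y) = same_factor x y"
  by (cases x; cases y) auto

lemma nf_iv: "nf p w \<Longrightarrow> nf p (iv p w)"
  unfolding nf_def by (auto simp: vl_linv successively_map same_factor_linv same_factor_sym)

lemma hinv_nf: "nf p w \<Longrightarrow> hinv p w = iv p w"
  by (simp add: hinv_def hred_nf nf_iv)

lemma roteq_rev_rot1: "roteq (rev zs) (rev (rotate1 zs))"
  by (cases zs) (auto intro: roteq_rot1')

lemma roteq_rev: "roteq (rev zs) (rev (rotate n zs))"
proof (induction n)
  case (Suc n)
  then show ?case using roteq_rev_rot1[of "rotate n zs"] roteq_trans by auto
qed simp

lemma roteq_iv: "roteq a b \<Longrightarrow> roteq (iv p a) (iv p b)"
  unfolding roteq_def[of a b] using roteq_rev by (metis rotate_map)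

lemma modinv: fixes a b p :: nat assumes "0 < a" "a < p" "0 < b" "b < p"
  shows "(p - b + (p - a)) mod p = (if (a + b) mod p = 0 then 0 else p - (a + b) mod p)"
proof -
  define s where "s = (a + b) mod p"
  have h3: "s = (if a + b < p then a + b else a + b - p)" unfolding s_def using assms by (intro mod2) simp
  have h: "(p - b + (p - a)) mod p = (if p - b + (p - a) < p then p - b + (p - a) else p - b + (p - a) - p)"
    using assms by (intro mod2) simp
  show ?thesis unfolding s_def[symmetric] h using h3 assms by (auto split: if_split_asm)
qed

lemma cr_iv: "nf p w \<Longrightarrow> 0 < p \<Longrightarrow> roteq (iv p (cr p w)) (cr p (iv p w))"
proof (induction p w rule: cr.induct)
  case (1 p w)
  show ?case
  proof (cases "2 \<le> length w \<and> same_factor (hd w) (last w)")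
    case False
    then have "\<not> (2 \<le> length (iv p w) \<and> same_factor (hd (iv p w)) (last (iv p w)))"
      by (cases w rule: rev_cases) (auto simp: same_factor_linv same_factor_sym last_rev hd_rev hd_map last_map)
    then show ?thesis using False by (simp add: cr_id)
  next
    case True
    then obtain x m y where w: "w = x # m @ [y]" by (meson split3E)
    have nm: "nf p m" using nf_mid "1.prems" w by blast
    show ?thesis
    proof (cases x)
      case Iota
      then have y: "y = Iota" using True w by simp
      have "iv p w = Iota # iv p m @ [Iota]" using w Iota y by simp
      then show ?thesis using 1 w Iota y True nm by simp
    next
      case (Gam a)
      then obtain b where y: "y = Gam b" using True w by (cases y) auto
      have ab: "0 < a" "a < p" "0 < b" "b < p" using "1.prems" w Gam y by (auto simp: nf_Cons nf_append)
      have iw: "iv p w = Gam (p - b) # iv p m @ [Gam (p - a)]" using w Gam y ab by simp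
      have md: "(p - b + (p - a)) mod p = (if (a + b) mod p = 0 then 0 else p - (a + b) mod p)"
        using modinv ab by blast
      show ?thesis
      proof (cases "(a + b) mod p = 0")
        case True
        then show ?thesis using 1 w Gam y nm iw md \<open>2 \<le> length w \<and> _\<close> by simp
      next
        case False
        have lt: "(a + b) mod p < p" using ab by simp
        have "iv p (cr p w) = Gam (p - (a + b) mod p) # iv p m"
          using w Gam y False lt by simp
        moreover have "cr p (iv p w) = iv p m @ [Gam (p - (a + b) mod p)]"
          using iw md False lt by simp
        ultimately show ?thesis using roteq_rot1 by simp
      qed
    qed
  qed
qed

lemma recip_roteq:
  assumes "nf p g" "0 < p" "g' \<in> hconjclass p g" "hreciprocal p g'"
  shows "roteq (cr p g) (iv p (cr p g))"
proof -
  have ng': "nf p g'" using assms by (simp add: hreciprocal_def hreduced_iff)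
  have "hconj p g' (hinv p g')" using assms by (simp add: hreciprocal_def)
  then have c1: "cj p g' (iv p g')" using ng' assms by (simp add: hconj_iff hinv_nf)
  have c2: "cj p g g'" using assms by (simp add: hconjclass_eq)
  have r1: "roteq (cr p g) (cr p g')" using cj_inv c2 assms by blast
  have r2: "roteq (cr p g') (cr p (iv p g'))" using cj_inv c1 ng' assms by blast
  have r3: "roteq (iv p (cr p g')) (cr p (iv p g'))" using cr_iv ng' assms by blast
  have r4: "roteq (iv p (cr p g')) (iv p (cr p g))" using roteq_iv roteq_sym r1 by blast
  show ?thesis using r1 r2 r3 r4 roteq_trans roteq_sym by meson
qed



definition Cf :: "'a list \<Rightarrow> int \<Rightarrow> 'a" where
  "Cf c z = c ! nat (z mod int (length c))"

lemma Cf_cong: "z mod int (length c) = w mod int (length c) \<Longrightarrow> Cf c z = Cf c w"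
  by (simp add: Cf_def)

lemma Cf_nat: "Cf c (int i) = c ! (i mod length c)"
  by (simp add: Cf_def flip: of_nat_mod)

lemma Cf_period: "Cf c (z + int (length c)) = Cf c z"
  by (rule Cf_cong) simp

lemma sf_alt: "\<not> same_factor x y \<Longrightarrow> same_factor x z = (\<not> same_factor y z)"
  by (cases x; cases y; cases z) auto

lemma sf_refl: "same_factor x x" by (cases x) auto

lemma sf_linv: "same_factor (linv p x) x" by (cases x) auto

lemma nf_parity: "nf p c \<Longrightarrow> i < length c \<Longrightarrow> same_factor (c ! 0) (c ! i) = even i"
proof (induction i)
  case 0 then show ?case by (simp add: sf_refl)
next
  case (Suc i)
  have "\<not> same_factor (c ! i) (c ! Suc i)" using Suc.prems successively_nth unfolding nf_def by fastforce
  moreover have "same_factor (c ! 0) (c ! i) = even i" using Suc by simp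
  ultimately show ?case using sf_alt[of "c ! i" "c ! Suc i" "c ! 0"] same_factor_sym[of "c ! i" "c ! 0"]
    same_factor_sym[of "c ! Suc i" "c ! 0"] by auto
qed

lemma cyc_even: assumes "nf p c" "cc c" "2 \<le> length c" shows "even (length c)"
proof -
  have "\<not> same_factor (hd c) (last c)" using assms by (simp add: cc_def)
  moreover have "c \<noteq> []" using assms by auto
  then have "hd c = c ! 0" "last c = c ! (length c - 1)"
    by (simp_all add: hd_conv_nth last_conv_nth)
  ultimately have "odd (length c - 1)" using nf_parity[OF assms(1), of "length c - 1"] assms by simp
  then show ?thesis using assms by (cases "length c") auto
qed

lemma rot_Cf: "i < length c \<Longrightarrow> rotate t c ! i = Cf c (int t + int i)"
  using nth_rotate[of i c t] Cf_nat[of c "t + i"] by simp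

lemma Cf_alt: assumes "nf p c" "cc c" "2 \<le> length c"
  shows "\<not> same_factor (Cf c z) (Cf c (z + 1))"
proof -
  define n where "n = length c"
  have n: "0 < n" using assms n_def by linarith
  define i where "i = nat (z mod int n)"
  have i: "i < n" "z mod int n = int i" using n unfolding i_def
    by (simp_all add: nat_less_iff)
  have cz: "Cf c z = c ! i" unfolding Cf_def i_def n_def by simp
  have cz1: "Cf c (z + 1) = Cf c (int (i + 1))"
  proof (rule Cf_cong)
    have "(z + 1) mod int n = (z mod int n + 1) mod int n" by (rule mod_add_left_eq[symmetric])
    then show "(z + 1) mod int (length c) = int (i + 1) mod int (length c)" using i(2) n_def by (simp add: add.commute)
  qed
  show ?thesis
  proof (cases "i + 1 < n")
    case True
    then have "Cf c (z + 1) = c ! (i + 1)" using cz1 Cf_nat[of c "i + 1"] n_def by simp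
    then show ?thesis using cz successively_nth[of _ c i] assms True n_def unfolding nf_def by auto
  next
    case False
    then have ii: "i = n - 1" using i by simp
    have "Cf c (z + 1) = c ! 0" using cz1 Cf_nat[of c "i + 1"] ii n n_def by simp
    moreover have "c \<noteq> []" using n n_def by auto
    then have "hd c = c ! 0" "last c = c ! (n - 1)" by (simp_all add: hd_conv_nth last_conv_nth n_def)
    ultimately show ?thesis using cz ii assms by (simp add: cc_def same_factor_sym)
  qed
qed

lemma Cf_iv: assumes "iv p c = rotate r c" "0 < length c"
  shows "Cf c (int r + z) = linv p (Cf c (-1 - z))"
proof -
  define n where "n = length c"
  define i where "i = nat (z mod int n)"
  have i: "i < n" "z mod int n = int i" using assms unfolding i_def n_def
    by (simp_all add: nat_less_iff)
  have "Cf c (int r + z) = Cf c (int (r + i))"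
  proof (rule Cf_cong)
    have "(int r + z) mod int n = (int r + z mod int n) mod int n" by (rule mod_add_right_eq[symmetric])
    then show "(int r + z) mod int (length c) = int (r + i) mod int (length c)" using i(2) n_def by simp
  qed
  also have "\<dots> = rotate r c ! i" using rot_Cf[of i c r] i n_def by simp
  also have "\<dots> = iv p c ! i" using assms by simp
  also have "\<dots> = linv p (c ! (n - Suc i))" using i n_def by (simp add: rev_nth)
  also have "c ! (n - Suc i) = Cf c (int (n - Suc i))" using Cf_nat[of c "n - Suc i"] i n_def by simp
  also have "\<dots> = Cf c (-1 - z)"
  proof (rule Cf_cong)
    have "int (n - Suc i) = int n + (-1 - int i)" using i by simp
    then have "int (n - Suc i) mod int n = (-1 - int i) mod int n" by simp
    also have "\<dots> = (-1 - z mod int n) mod int n" using i(2) by simp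
    also have "\<dots> = (-1 - z) mod int n" by (rule mod_diff_right_eq)
    finally show "int (n - Suc i) mod int (length c) = (-1 - z) mod int (length c)" using n_def by simp
  qed
  finally show ?thesis .
qed

definition Sym :: "nat \<Rightarrow> hletter list \<Rightarrow> bool" where
  "Sym p d \<longleftrightarrow> (\<forall>i<length d. d ! i = linv p (d ! ((length d - i) mod length d)))"

lemma sym_exists:
  assumes "nf p c" "cc c" "2 \<le> length c" "roteq c (iv p c)"
  shows "\<exists>t. Sym p (rotate t c)"
proof -
  obtain r where r: "iv p c = rotate r c" using assms(4) by (auto simp: roteq_def)
  define n where "n = length c"
  have n: "0 < n" using assms n_def by linarith
  define M where "M = int r - 1"
  have H: "\<And>j. Cf c j = linv p (Cf c (M - j))"
  proof -
    fix j
    have "Cf c (int r + (j - int r)) = linv p (Cf c (-1 - (j - int r)))" using Cf_iv[OF r] n n_def by blast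
    moreover have "-1 - (j - int r) = M - j" unfolding M_def by simp
    ultimately show "Cf c j = linv p (Cf c (M - j))" by simp
  qed
  have "even M"
  proof (rule ccontr)
    assume "odd M"
    then obtain j where j: "M = 2 * j + 1" by (rule oddE)
    have "Cf c j = linv p (Cf c (j + 1))" using H[of j] j by (simp add: add.commute)
    then have "same_factor (Cf c j) (Cf c (j + 1))" using sf_linv[of p "Cf c (j + 1)"] by simp
    then show False using Cf_alt assms by blast
  qed
  then obtain T where T: "M = 2 * T" by (rule evenE)
  define t where "t = nat (T mod int n)"
  have t: "int t mod int n = T mod int n" using n unfolding t_def by simp
  have Sym: "Sym p (rotate t c)" unfolding Sym_def
  proof (intro allI impI)
    fix i assume "i < length (rotate t c)"
    then have i: "i < n" using n_def by simp
    have "(int t + int i) mod int n = (int t mod int n + int i) mod int n" by (rule mod_add_left_eq[symmetric])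
    also have "\<dots> = (T mod int n + int i) mod int n" using t by simp
    also have "\<dots> = (T + int i) mod int n" by (rule mod_add_left_eq)
    finally have "(int t + int i) mod int n = (T + int i) mod int n" .
    then have a: "rotate t c ! i = Cf c (T + int i)"
      using rot_Cf[of i c t] i n_def Cf_cong[of "int t + int i" c "T + int i"] by simp
    have "(n - i) mod n < n" using n by simp
    then have b: "rotate t c ! ((n - i) mod n) = Cf c (T - int i)"
    proof -
      have "rotate t c ! ((n - i) mod n) = Cf c (int t + int ((n - i) mod n))"
        using rot_Cf[of "(n - i) mod n" c t] n_def \<open>(n - i) mod n < n\<close> by simp
      also have "\<dots> = Cf c (T - int i)"
      proof (rule Cf_cong)
        have e1: "int ((n - i) mod n) = (int n - int i) mod int n" using i by (simp add: of_nat_mod of_nat_diff)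
        have "(int t + int ((n - i) mod n)) mod int n = (int t + (int n - int i)) mod int n"
          unfolding e1 by (rule mod_add_right_eq)
        also have "\<dots> = (int t mod int n + (int n - int i)) mod int n" by (rule mod_add_left_eq[symmetric])
        also have "\<dots> = (T mod int n + (int n - int i)) mod int n" using t by simp
        also have "\<dots> = (T + (int n - int i)) mod int n" by (rule mod_add_left_eq)
        also have "T + (int n - int i) = (T - int i) + int n" by simp
        also have "((T - int i) + int n) mod int n = (T - int i) mod int n" by (rule mod_add_self2)
        finally show "(int t + int ((n - i) mod n)) mod int (length c) = (T - int i) mod int (length c)"
          using n_def by simp
      qed
      finally show ?thesis .
    qed
    have "Cf c (T + int i) = linv p (Cf c (T - int i))" using H[of "T + int i"] T by (simp add: algebra_simps)
    then show "rotate t c ! i = linv p (rotate t c ! ((length (rotate t c) - i) mod length (rotate t c)))"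
      using a b n_def by simp
  qed
  then show ?thesis by blast
qed



lemma fiber_card:
  assumes "finite A" "\<And>a. a \<in> A \<Longrightarrow> card {b \<in> A. f b = f a} \<le> k"
  shows "card A \<le> k * card (f ` A)"
proof -
  have A: "A = (\<Union>y\<in>f ` A. {a \<in> A. f a = y})" by auto
  have "card A = (\<Sum>y\<in>f ` A. card {a \<in> A. f a = y})"
    by (subst A, rule card_UN_disjoint) (use assms in auto)
  also have "\<dots> \<le> (\<Sum>y\<in>f ` A. k)"
    by (rule sum_mono) (use assms in auto)
  finally show ?thesis by (simp add: mult.commute)
qed

lemma llen_pos: "vl p x \<Longrightarrow> 1 \<le> llen p x"
  by (cases x) auto

lemma llen_le: "0 < p \<Longrightarrow> llen p x \<le> p"
  by (cases x) auto

lemma llen_linv: "vl p x \<Longrightarrow> llen p (linv p x) = llen p x"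
  by (cases x) auto

lemma wlen_Nil[simp]: "wlen p [] = 0" by (simp add: wlen_def)
lemma wlen_Cons[simp]: "wlen p (x # w) = llen p x + wlen p w" by (simp add: wlen_def)
lemma wlen_append[simp]: "wlen p (u @ v) = wlen p u + wlen p v" by (simp add: wlen_def)

lemma wlen_iv: "vls p w \<Longrightarrow> wlen p (iv p w) = wlen p w"
  by (induction w) (auto simp: vls_def llen_linv)

lemma length_le_wlen: "vls p w \<Longrightarrow> length w \<le> wlen p w"
  by (induction w) (auto simp: vls_def dest: llen_pos)

lemma wlen_le_length: "0 < p \<Longrightarrow> wlen p w \<le> p * length w"
  by (induction w) (auto intro: add_mono llen_le)

definition Rn :: "nat \<Rightarrow> nat \<Rightarrow> hletter list set" where
  "Rn p m = {w. nf p w \<and> wlen p w \<le> m}"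

lemma finite_Rn: "finite (Rn p m)"
proof -
  have "Rn p m \<subseteq> {xs. set xs \<subseteq> insert Iota (Gam ` {..<p}) \<and> length xs \<le> m}"
  proof
    fix w assume "w \<in> Rn p m"
    then have "nf p w" "wlen p w \<le> m" by (auto simp: Rn_def)
    then have "length w \<le> m" using length_le_wlen nf_vls le_trans by blast
    moreover have "set w \<subseteq> insert Iota (Gam ` {..<p})"
    proof
      fix x assume "x \<in> set w"
      then have "vl p x" using \<open>nf p w\<close> by (auto simp: nf_def)
      then show "x \<in> insert Iota (Gam ` {..<p})" by (cases x) auto
    qed
    ultimately show "w \<in> {xs. set xs \<subseteq> insert Iota (Gam ` {..<p}) \<and> length xs \<le> m}" by simp
  qed
  then show ?thesis using finite_lists_length_le[of "insert Iota (Gam ` {..<p})" m] finite_subset by blast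
qed

lemma Rn_mono: "m \<le> m' \<Longrightarrow> Rn p m \<subseteq> Rn p m'"
  by (auto simp: Rn_def)

lemma card_Rn_mono: "m \<le> m' \<Longrightarrow> card (Rn p m) \<le> card (Rn p m')"
  by (rule card_mono[OF finite_Rn Rn_mono])

lemma Nil_Rn: "[] \<in> Rn p m" by (simp add: Rn_def)

lemma card_Rn_pos: "1 \<le> card (Rn p m)"
  using finite_Rn Nil_Rn by (metis One_nat_def Suc_leI card_gt_0_iff empty_iff)

lemma rot1_cj: assumes "nf p c" "cc c" "0 < p"
  shows "nf p (rotate1 c) \<and> cc (rotate1 c) \<and> cj p c (rotate1 c)"
proof (cases "2 \<le> length c")
  case False then show ?thesis using assms cj_refl by simp
next
  case True
  then obtain x w where c: "c = x # w" "w \<noteq> []" by (cases c; cases "tl c") auto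
  have vx: "vl p x" using assms c by (simp add: nf_Cons)
  have n1: "nf p (w @ [x])" using assms c True by (auto simp: nf_Cons nf_append cc_def same_factor_sym)
  have c1: "cc (w @ [x])" using assms c by (cases w) (auto simp: nf_Cons cc_def same_factor_sym)
  have "hred p ([linv p x] @ c @ iv p [linv p x]) = w @ [x]"
    using c hred_cancel1[of p "[]" x "w @ [x]"] assms n1 by (simp add: linv_linv vx hred_nf)
  then have "cj p c (w @ [x])" unfolding cj_def vls_def using vx vl_linv
    by (metis empty_iff list.set(1) set_ConsD)
  then show ?thesis using n1 c1 c by simp
qed

lemma rot_cj: "nf p c \<Longrightarrow> cc c \<Longrightarrow> 0 < p \<Longrightarrow> nf p (rotate t c) \<and> cc (rotate t c) \<and> cj p c (rotate t c)"
proof (induction t)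
  case 0 then show ?case using cj_refl by simp
next
  case (Suc t)
  then show ?case using rot1_cj[of p "rotate t c"] cj_trans by auto
qed



definition code :: "hletter list \<Rightarrow> hletter list" where
  "code c = (if length c \<le> 1 then c else take (length c div 2 + 1) c)"

definition SymOK :: "nat \<Rightarrow> hletter list \<Rightarrow> bool" where
  "SymOK p c \<longleftrightarrow> nf p c \<and> cc c \<and> (length c \<le> 1 \<or> Sym p c)"

lemma wlen_nth: "wlen p w = (\<Sum>i<length w. llen p (w ! i))"
  unfolding wlen_def by (simp add: sum_list_sum_nth atLeast0LessThan)

lemma nf_take: "nf p w \<Longrightarrow> nf p (take k w)"
  by (metis append_take_drop_id nf_append)

lemma nf_drop: "nf p w \<Longrightarrow> nf p (drop k w)"
  by (metis append_take_drop_id nf_append)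

lemma code_inj:
  assumes "SymOK p c1" "SymOK p c2" "code c1 = code c2"
  shows "c1 = c2"
proof -
  have len: "length (code c) \<le> 1 \<longleftrightarrow> length c \<le> 1" for c
    by (auto simp: code_def)
  show ?thesis
  proof (cases "length c1 \<le> 1")
    case True
    then have "length c2 \<le> 1" using len assms(3) by metis
    then show ?thesis using True assms(3) by (simp add: code_def)
  next
    case False
    then have F2: "\<not> length c2 \<le> 1" using len assms(3) by metis
    have e1: "even (length c1)" "even (length c2)" using assms False F2 cyc_even
      unfolding SymOK_def by auto
    have t: "take (length c1 div 2 + 1) c1 = take (length c2 div 2 + 1) c2"
      using assms(3) False F2 by (simp add: code_def)
    then have "min (length c1) (length c1 div 2 + 1) = min (length c2) (length c2 div 2 + 1)"
      by (metis length_take)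
    moreover have "min (length c1) (length c1 div 2 + 1) = length c1 div 2 + 1" using False by simp
    moreover have "min (length c2) (length c2 div 2 + 1) = length c2 div 2 + 1" using F2 by simp
    ultimately have "length c1 div 2 = length c2 div 2" by simp
    then have L: "length c1 = length c2" using e1 by (metis dvd_mult_div_cancel)
    define n where "n = length c1"
    have S: "Sym p c1" "Sym p c2" using assms False F2 unfolding SymOK_def by auto
    have low: "c1 ! i = c2 ! i" if "i \<le> n div 2" for i
    proof -
      have "take (n div 2 + 1) c1 ! i = take (n div 2 + 1) c2 ! i" using t L n_def by simp
      then show ?thesis using that by simp
    qed
    show ?thesis
    proof (rule nth_equalityI)
      show "length c1 = length c2" by (rule L)
      fix i assume i: "i < length c1"
      show "c1 ! i = c2 ! i"
      proof (cases "i \<le> n div 2")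
        case True then show ?thesis using low by simp
      next
        case False
        have m: "(n - i) mod n = n - i" "n - i \<le> n div 2" using False i n_def by auto
        have "c1 ! i = linv p (c1 ! ((n - i) mod n))" using S(1) i n_def by (simp add: Sym_def)
        moreover have "c2 ! i = linv p (c2 ! ((n - i) mod n))" using S(2) i n_def L by (simp add: Sym_def)
        ultimately show ?thesis using low m by simp
      qed
    qed
  qed
qed

lemma code_wlen:
  assumes "SymOK p c" "0 < p"
  shows "nf p (code c) \<and> 2 * wlen p (code c) \<le> wlen p c + 2 * p"
proof (cases "length c \<le> 1")
  case True
  then have "wlen p c \<le> p" using wlen_le_length[OF assms(2), of c] by (cases c) auto
  then show ?thesis using True assms by (simp add: code_def SymOK_def)
next
  case False
  define n where "n = length c"
  have ev: "even n" using assms False cyc_even n_def unfolding SymOK_def by auto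
  then obtain j where j: "n = 2 * j" by (rule evenE)
  define m where "m = j - 1"
  have m: "n = 2 * m + 2" using j False n_def unfolding m_def by simp
  define f where "f i = llen p (c ! i)" for i
  have S: "Sym p c" using assms False unfolding SymOK_def by auto
  have vc: "vls p c" using assms nf_vls unfolding SymOK_def by auto
  have k: "length c div 2 + 1 = m + 2" using m n_def by simp
  have ct: "code c = take (m + 2) c" using False k by (simp add: code_def)
  have lt: "length (take (m + 2) c) = m + 2" "length (drop (m + 2) c) = m" using m n_def by simp_all
  have wt: "wlen p (take (m + 2) c) = (\<Sum>i<m + 2. f i)"
    unfolding wlen_nth f_def lt by (rule sum.cong) simp_all
  have wd: "wlen p (drop (m + 2) c) = (\<Sum>i<m. f (m + 2 + i))"
    unfolding wlen_nth f_def lt by (rule sum.cong) (use m n_def in simp_all)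
  have sym: "f (m + 2 + i) = f (m - i)" if "i < m" for i
  proof -
    have "m + 2 + i < length c" using that m n_def by simp
    then have "c ! (m + 2 + i) = linv p (c ! ((n - (m + 2 + i)) mod n))"
      using S n_def unfolding Sym_def by blast
    moreover have "(n - (m + 2 + i)) mod n = m - i"
    proof -
      have "n - (m + 2 + i) = m - i" using m by simp
      moreover have "m - i < n" using m by simp
      ultimately show ?thesis by simp
    qed
    moreover have "vl p (c ! (m - i))" using vc m n_def that by (simp add: vls_def)
    ultimately show ?thesis unfolding f_def by (simp add: llen_linv)
  qed
  have "(\<Sum>i<m. f (m + 2 + i)) = (\<Sum>i<m. f (Suc (m - Suc i)))"
    by (rule sum.cong) (use sym in \<open>auto simp: Suc_diff_Suc\<close>)
  also have "\<dots> = (\<Sum>i<m. f (Suc i))" by (rule sum.nat_diff_reindex)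
  finally have wd2: "wlen p (drop (m + 2) c) = (\<Sum>i<m. f (Suc i))" using wd by simp
  have "(\<Sum>i<m + 2. f i) = f 0 + (\<Sum>i<m + 1. f (Suc i))"
    by (simp only: add_2_eq_Suc' sum.lessThan_Suc_shift Suc_eq_plus1[symmetric])
  also have "(\<Sum>i<m + 1. f (Suc i)) = (\<Sum>i<m. f (Suc i)) + f (Suc m)"
    by (simp only: Suc_eq_plus1[symmetric] sum.lessThan_Suc)
  finally have wt2: "wlen p (take (m + 2) c) = f 0 + (\<Sum>i<m. f (Suc i)) + f (Suc m)" using wt by simp
  have wc: "wlen p c = wlen p (take (m + 2) c) + wlen p (drop (m + 2) c)"
    by (metis append_take_drop_id wlen_append)
  have "f 0 \<le> p" "f (Suc m) \<le> p" unfolding f_def using llen_le assms by auto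
  then have "2 * wlen p (code c) \<le> wlen p c + 2 * p" using wc wt2 wd2 ct by simp
  then show ?thesis using ct assms nf_take unfolding SymOK_def by auto
qed



lemma class_eq:
  assumes "nf p g1" "nf p g2" "c \<in> hconjclass p g1" "c \<in> hconjclass p g2" "0 < p"
  shows "hconjclass p g1 = hconjclass p g2"
proof -
  have c: "cj p g1 c" "cj p g2 c" using assms by (auto simp: hconjclass_eq)
  have n: "nf p c" using c assms cj_nf by blast
  have s1: "cj p c g1" "cj p c g2" using c assms cj_sym by blast+
  have "cj p g1 w \<longleftrightarrow> cj p g2 w" for w
  proof
    assume "cj p g1 w"
    then show "cj p g2 w" using cj_trans[OF cj_trans[OF c(2) s1(1) assms(5)] _ assms(5)] by blast
  next
    assume "cj p g2 w"
    then show "cj p g1 w" using cj_trans[OF cj_trans[OF c(1) s1(2) assms(5)] _ assms(5)] by blast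
  qed
  then show ?thesis using assms by (simp add: hconjclass_eq)
qed

lemma W_elem:
  assumes "0 < p" "K \<in> W p y"
  shows "(\<exists>g. nf p g \<and> K = hconjclass p g) \<and> (\<exists>c \<in> K. SymOK p c \<and> real (wlen p c) \<le> y)"
proof -
  have K: "K \<in> recip_classes p" "real (class_len p K) \<le> y" using assms(2) by (simp_all add: W_def)
  obtain g where g0: "hreduced p g" "K = hconjclass p g" "\<exists>g'\<in>K. hreciprocal p g'"
    using K(1) unfolding recip_classes_def by blast
  obtain g' where g': "g' \<in> K" "hreciprocal p g'" using g0 by blast
  note g = g0(1,2) g' K(2)
  have ng: "nf p g" using g assms by (simp add: hreduced_iff)
  define c0 where "c0 = cr p g"
  have wl: "real (wlen p c0) \<le> y" using g class_len_eq[OF ng assms(1)] c0_def by simp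
  have nc: "nf p c0" "cc c0" using cr_nf_cc[OF ng assms(1)] c0_def by auto
  have c0K: "c0 \<in> K" using class_members(3)[OF ng assms(1)] g c0_def by simp
  have "\<exists>c \<in> K. SymOK p c \<and> real (wlen p c) \<le> y"
  proof (cases "length c0 \<le> 1")
    case True then show ?thesis using c0K nc wl by (auto simp: SymOK_def)
  next
    case False
    have "roteq c0 (iv p c0)" using recip_roteq[OF ng assms(1)] g c0_def by simp
    moreover have "2 \<le> length c0" using False by simp
    ultimately obtain t where t: "Sym p (rotate t c0)" using sym_exists[OF nc] by blast
    have r: "nf p (rotate t c0)" "cc (rotate t c0)" "cj p c0 (rotate t c0)"
      using rot_cj[OF nc assms(1)] by auto
    have "cj p g c0" using c0K g ng assms by (simp add: hconjclass_eq)
    then have "cj p g (rotate t c0)" using r(3) cj_trans assms by blast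
    then have "rotate t c0 \<in> K" using g ng assms by (simp add: hconjclass_eq)
    moreover have "SymOK p (rotate t c0)" using r t by (simp add: SymOK_def)
    moreover have "wlen p (rotate t c0) = wlen p c0" by (rule wlen_rotate)
    ultimately show ?thesis using wl by auto
  qed
  then show ?thesis using ng g by blast
qed

lemma upper:
  assumes "0 < p"
  shows "finite (W p y) \<and> card (W p y) \<le> card (Rn p (nat \<lfloor>y\<rfloor> div 2 + p))"
proof -
  define P where "P K c \<longleftrightarrow> c \<in> K \<and> SymOK p c \<and> real (wlen p c) \<le> y" for K c
  define f where "f K = code (SOME c. P K c)" for K
  have PK: "P K (SOME c. P K c)" if "K \<in> W p y" for K
    using W_elem[OF assms that] unfolding P_def by (metis (mono_tags, lifting) someI_ex)
  have img: "f ` W p y \<subseteq> Rn p (nat \<lfloor>y\<rfloor> div 2 + p)"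
  proof
    fix w assume "w \<in> f ` W p y"
    then obtain K where K: "K \<in> W p y" "w = f K" by blast
    define c where "c = (SOME c. P K c)"
    have Pc: "P K c" using PK K c_def by simp
    have "int (wlen p c) \<le> \<lfloor>y\<rfloor>" using Pc unfolding P_def by (simp add: le_floor_iff)
    then have wc: "wlen p c \<le> nat \<lfloor>y\<rfloor>" by linarith
    have "nf p (code c) \<and> 2 * wlen p (code c) \<le> wlen p c + 2 * p"
      using code_wlen Pc assms unfolding P_def by blast
    then show "w \<in> Rn p (nat \<lfloor>y\<rfloor> div 2 + p)" using K wc c_def unfolding f_def Rn_def by auto
  qed
  have inj: "inj_on f (W p y)"
  proof (rule inj_onI)
    fix K1 K2 assume K: "K1 \<in> W p y" "K2 \<in> W p y" "f K1 = f K2"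
    define c1 where "c1 = (SOME c. P K1 c)"
    define c2 where "c2 = (SOME c. P K2 c)"
    have P: "P K1 c1" "P K2 c2" using PK K c1_def c2_def by auto
    have "c1 = c2" using code_inj P K(3) unfolding P_def f_def c1_def c2_def by blast
    moreover obtain g1 where "nf p g1" "K1 = hconjclass p g1" using W_elem[OF assms K(1)] by blast
    moreover obtain g2 where "nf p g2" "K2 = hconjclass p g2" using W_elem[OF assms K(2)] by blast
    ultimately show "K1 = K2" using class_eq[of p g1 g2 c1] P assms unfolding P_def by blast
  qed
  have "finite (W p y)" using inj_on_finite[OF inj img finite_Rn] .
  moreover have "card (W p y) \<le> card (Rn p (nat \<lfloor>y\<rfloor> div 2 + p))"
    using card_inj_on_le[OF inj img finite_Rn] .
  ultimately show ?thesis by blast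
qed



definition cu :: "nat \<Rightarrow> hletter list \<Rightarrow> hletter list" where
  "cu p u = Iota # u @ Iota # iv p u"

definition An :: "nat \<Rightarrow> nat \<Rightarrow> hletter list set" where
  "An p m = {u. nf p u \<and> u \<noteq> [] \<and> hd u \<noteq> Iota \<and> last u \<noteq> Iota \<and> wlen p u \<le> m}"

lemma finite_An: "finite (An p m)"
  by (rule finite_subset[OF _ finite_Rn[of p m]]) (auto simp: An_def Rn_def)

lemma linv_Iota_iff: "linv p x = Iota \<longleftrightarrow> x = Iota"
  by (cases x) auto

lemma cu_props:
  assumes "nf p u" "u \<noteq> []" "hd u \<noteq> Iota" "last u \<noteq> Iota" "0 < p"
  shows "nf p (cu p u)" "cc (cu p u)" "iv p (cu p u) = rotate1 (cu p u)"
    "wlen p (cu p u) = 2 * wlen p u + 2"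
proof -
  have vu: "vls p u" using assms nf_vls by blast
  have niv: "nf p (iv p u)" using nf_iv assms by blast
  have hiv: "hd (iv p u) \<noteq> Iota" "last (iv p u) \<noteq> Iota" "iv p u \<noteq> []"
    using assms by (auto simp: hd_rev last_rev hd_map last_map linv_Iota_iff)
  show "nf p (cu p u)" unfolding cu_def using assms niv hiv
    by (auto simp: nf_Cons nf_append)
  show "cc (cu p u)" unfolding cu_def cc_def using hiv by (cases "iv p u" rule: rev_cases) auto
  show "iv p (cu p u) = rotate1 (cu p u)" unfolding cu_def using iv_iv[OF vu] by simp
  show "wlen p (cu p u) = 2 * wlen p u + 2" unfolding cu_def using wlen_iv[OF vu] by simp
qed

lemma cu_inj: "cu p u = cu p v \<Longrightarrow> u = v"
proof -
  assume e: "cu p u = cu p v"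
  have "length (cu p u) = 2 * length u + 2" "length (cu p v) = 2 * length v + 2"
    by (simp_all add: cu_def)
  then have "length u = length v" using e by simp
  moreover have "take (length u) (tl (cu p u)) = u" "take (length v) (tl (cu p v)) = v"
    by (simp_all add: cu_def)
  ultimately show "u = v" using e by metis
qed

lemma rev_rotate: "rev (rotate s xs) = rotate (length xs - s mod length xs) (rev xs)"
proof (cases "xs = []")
  case True then show ?thesis by simp
next
  case False
  define L where "L = length xs"
  have L: "0 < L" using False L_def by simp
  have "rotate (L - s mod L) (rev xs) = rev (rotate (L - (L - s mod L) mod L) xs)"
    using rotate_rev L_def by simp
  also have "rotate (L - (L - s mod L) mod L) xs = rotate s xs"
  proof (cases "s mod L = 0")
    case True then show ?thesis using L L_def by simp
  next
    case False
    have "s mod L < L" using L by simp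
    then have "(L - s mod L) mod L = L - s mod L" using False by simp
    then have "L - (L - s mod L) mod L = s mod L" using \<open>s mod L < L\<close> by simp
    then show ?thesis using L_def by (metis rotate_conv_mod)
  qed
  finally show ?thesis using L_def by simp
qed

lemma iv_rotate: "iv p (rotate s c) = rotate (length c - s mod length c) (iv p c)"
  by (simp add: rotate_map[symmetric] rev_rotate)

lemma rot_modeq: "a mod length c = b mod length c \<Longrightarrow> rotate a c = rotate b c"
  by (metis rotate_conv_mod)

lemma rot_double:
  assumes "iv p c = rotate1 c" "iv p (rotate s c) = rotate1 (rotate s c)" "c \<noteq> []"
  shows "rotate (2 * s) c = c"
proof -
  define L where "L = length c"
  have L: "0 < L" using assms L_def by simp
  have "rotate (1 + s) c = rotate (L - s mod L + 1) c"
  proof -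
    have "rotate (1 + s) c = rotate1 (rotate s c)" by (simp add: rotate_rotate[symmetric])
    also have "\<dots> = iv p (rotate s c)" using assms by simp
    also have "\<dots> = rotate (L - s mod L) (rotate1 c)" using iv_rotate assms L_def by simp
    also have "\<dots> = rotate (L - s mod L + 1) c" by (simp add: rotate_rotate[symmetric] rotate1_rotate_swap)
    finally show ?thesis .
  qed
  then have "rotate (s mod L + L - 1) (rotate (1 + s) c) = rotate (s mod L + L - 1) (rotate (L - s mod L + 1) c)"
    by simp
  then have e: "rotate (s mod L + L - 1 + (1 + s)) c = rotate (s mod L + L - 1 + (L - s mod L + 1)) c"
    by (simp only: rotate_rotate)
  have "s mod L < L" using L by simp
  have a1: "s mod L + L - 1 + (1 + s) = s mod L + s + L" using L by simp
  have a2: "s mod L + L - 1 + (L - s mod L + 1) = 2 * L" using L \<open>s mod L < L\<close> by simp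
  have "rotate (2 * s) c = rotate (s mod L + s + L) c"
  proof (rule rot_modeq)
    have "(s mod L + s + L) mod L = (s mod L + s) mod L" by simp
    also have "\<dots> = (s + s) mod L" by (simp add: mod_add_left_eq)
    finally show "2 * s mod length c = (s mod L + s + L) mod length c" using L_def by (simp add: mult_2)
  qed
  also have "\<dots> = rotate (2 * L) c" using e unfolding a1 a2 .
  also have "\<dots> = c" using L_def by simp
  finally show ?thesis .
qed

lemma rotate_mult: "rotate d c = c \<Longrightarrow> rotate (d * q) c = c"
proof (induction q)
  case (Suc q)
  have "rotate (d * Suc q) c = rotate d (rotate (d * q) c)" by (simp add: rotate_rotate add.commute)
  then show ?case using Suc by simp
qed simp

lemma rotate_mod_period: "rotate d c = c \<Longrightarrow> rotate t c = rotate (t mod d) c"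
proof -
  assume d: "rotate d c = c"
  have "rotate t c = rotate (t mod d + d * (t div d)) c" by simp
  also have "\<dots> = rotate (t mod d) (rotate (d * (t div d)) c)" by (simp add: rotate_rotate)
  finally show ?thesis using rotate_mult[OF d] by simp
qed

lemma two_choices:
  assumes "c \<noteq> []"
  shows "\<exists>a b. \<forall>s. rotate (2 * s) c = c \<longrightarrow> rotate s c \<in> {a, b}"
proof -
  define d where "d = (LEAST t. 0 < t \<and> rotate t c = c)"
  have ex: "0 < length c \<and> rotate (length c) c = c" using assms by simp
  have d: "0 < d" "rotate d c = c" using LeastI[of "\<lambda>t. 0 < t \<and> rotate t c = c", OF ex] d_def by auto
  have per: "t mod d = 0" if "rotate t c = c" for t
  proof (rule ccontr)
    assume ne: "t mod d \<noteq> 0"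
    have "rotate (t mod d) c = c" using rotate_mod_period[OF d(2), of t] that by simp
    then have "0 < t mod d \<and> rotate (t mod d) c = c" using ne by simp
    then have "d \<le> t mod d" unfolding d_def by (rule Least_le)
    moreover have "t mod d < d" using d by simp
    ultimately show False by simp
  qed
  have "rotate s c \<in> {c, rotate (d div 2) c}" if "rotate (2 * s) c = c" for s
  proof -
    define r where "r = s mod d"
    have r: "r < d" using d r_def by simp
    have "(2 * s) mod d = 0" using per that by blast
    then have "(2 * r) mod d = 0" unfolding r_def by (metis mod_mult_right_eq)
    then have "d dvd 2 * r" by (simp add: mod_eq_0_iff_dvd)
    then obtain q where q: "2 * r = d * q" by (rule dvdE)
    have "q < 2"
    proof (rule ccontr)
      assume "\<not> q < 2"
      then have "d * 2 \<le> d * q" by simp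
      then show False using q r by linarith
    qed
    then have "r = 0 \<or> r = d div 2" using q by (cases q) auto
    then show ?thesis using rotate_mod_period[OF d(2), of s] r_def by auto
  qed
  then show ?thesis by blast
qed



lemma Ku_in_W:
  assumes "0 < p" "u \<in> An p m" "real (2 * m + 2) \<le> x"
  shows "hconjclass p (cu p u) \<in> W p x"
proof -
  have u: "nf p u" "u \<noteq> []" "hd u \<noteq> Iota" "last u \<noteq> Iota" "wlen p u \<le> m" using assms by (auto simp: An_def)
  note cp = cu_props[OF u(1-4) assms(1)]
  have r: "hreduced p (cu p u)" using cp assms by (simp add: hreduced_iff)
  have cj1: "cj p (cu p u) (rotate1 (cu p u))" using rot1_cj[OF cp(1,2) assms(1)] by blast
  have "hconj p (cu p u) (hinv p (cu p u))" using cj1 cp hinv_nf hconj_iff assms by simp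
  then have rec: "hreciprocal p (cu p u)" using r by (simp add: hreciprocal_def cu_def)
  have mem: "cu p u \<in> hconjclass p (cu p u)" using cj_refl cp assms by (simp add: hconjclass_eq)
  have "hconjclass p (cu p u) \<in> recip_classes p"
    unfolding recip_classes_def using r mem rec by blast
  moreover have "class_len p (hconjclass p (cu p u)) = wlen p (cu p u)"
    using class_len_eq[OF cp(1) assms(1)] cr_cc_id[OF cp(2)] by simp
  moreover have "real (wlen p (cu p u)) \<le> x" using cp(4) u(5) assms(3) by simp
  ultimately show ?thesis by (simp add: W_def)
qed

lemma lower:
  assumes "0 < p" "real (2 * m + 2) \<le> x"
  shows "card (An p m) \<le> 2 * card (W p x)"
proof -
  define f where "f u = hconjclass p (cu p u)" for u
  have fib: "card {v \<in> An p m. f v = f u} \<le> 2" if u: "u \<in> An p m" for u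
  proof -
    have uu: "nf p u" "u \<noteq> []" "hd u \<noteq> Iota" "last u \<noteq> Iota" using u by (auto simp: An_def)
    note cp = cu_props[OF uu assms(1)]
    have ne: "cu p u \<noteq> []" by (simp add: cu_def)
    obtain a b where ab: "\<And>s. rotate (2 * s) (cu p u) = cu p u \<Longrightarrow> rotate s (cu p u) \<in> {a, b}"
      using two_choices[OF ne] by blast
    have sub: "cu p ` {v \<in> An p m. f v = f u} \<subseteq> {a, b}"
    proof
      fix w assume "w \<in> cu p ` {v \<in> An p m. f v = f u}"
      then obtain v where v: "v \<in> An p m" "f v = f u" "w = cu p v" by blast
      have vv: "nf p v" "v \<noteq> []" "hd v \<noteq> Iota" "last v \<noteq> Iota" using v by (auto simp: An_def)
      note cv = cu_props[OF vv assms(1)]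
      have "cu p v \<in> hconjclass p (cu p v)" using cj_refl cv assms by (simp add: hconjclass_eq)
      then have "cu p v \<in> hconjclass p (cu p u)" using v unfolding f_def by simp
      moreover have "cyc_reduced p (cu p v)" using cv assms by (simp add: cyc_reduced_iff)
      ultimately have "roteq (cr p (cu p u)) (cu p v)" using class_members(2)[OF cp(1) assms(1)] by blast
      then obtain s where s: "cu p v = rotate s (cu p u)" using cr_cc_id[OF cp(2)] by (auto simp: roteq_def)
      have "rotate (2 * s) (cu p u) = cu p u" using rot_double[OF cp(3) _ ne] cv(3) s by simp
      then show "w \<in> {a, b}" using ab s v by simp
    qed
    have "inj_on (cu p) {v \<in> An p m. f v = f u}" by (meson cu_inj inj_onI)
    then have "card {v \<in> An p m. f v = f u} \<le> card {a, b}" using card_inj_on_le sub by blast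
    also have "\<dots> \<le> 2" by (simp add: card_insert_if)
    finally show ?thesis .
  qed
  have "card (An p m) \<le> 2 * card (f ` An p m)" using fiber_card[OF finite_An fib] by simp
  also have "card (f ` An p m) \<le> card (W p x)"
    by (rule card_mono) (use upper[OF assms(1)] Ku_in_W[OF assms(1) _ assms(2)] f_def in auto)
  finally show ?thesis by simp
qed



definition En :: "nat \<Rightarrow> nat \<Rightarrow> hletter list set" where
  "En p a = {w. nf p w \<and> wlen p w = a}"

lemma finite_En: "finite (En p a)"
  by (rule finite_subset[OF _ finite_Rn[of p a]]) (auto simp: En_def Rn_def)

lemma llen_G1: "2 \<le> p \<Longrightarrow> llen p (Gam 1) = 1" by simp
lemma llen_G2: "3 \<le> p \<Longrightarrow> llen p (Gam 2) \<le> 2" by simp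

definition pre :: "hletter list \<Rightarrow> hletter list" where
  "pre u = (if u = [] \<or> hd u = Iota then [Gam 1] else [])"
definition suf :: "hletter list \<Rightarrow> hletter list" where
  "suf u = (if u \<noteq> [] \<and> last u = Iota then [Gam 1] else [])"

lemma enc_An:
  assumes "3 \<le> p" "u \<in> Rn p m"
  shows "pre u @ u @ suf u \<in> An p (m + 2)"
proof -
  have u: "nf p u" "wlen p u \<le> m" using assms by (auto simp: Rn_def)
  have v1: "vl p (Gam 1)" using assms by simp
  have n: "nf p (pre u @ u @ suf u)"
    using u v1 by (cases "u = []"; cases "hd u"; cases "last u") (auto simp: pre_def suf_def nf_append nf_Cons)
  have ne: "pre u @ u @ suf u \<noteq> []" by (auto simp: pre_def)
  have h: "hd (pre u @ u @ suf u) \<noteq> Iota" by (auto simp: pre_def suf_def)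
  have l: "last (pre u @ u @ suf u) \<noteq> Iota" by (auto simp: pre_def suf_def)
  have "wlen p (pre u) \<le> 1" "wlen p (suf u) \<le> 1" using assms by (auto simp: pre_def suf_def)
  then have "wlen p (pre u @ u @ suf u) \<le> m + 2" using u by simp
  then show ?thesis using n ne h l by (simp add: An_def)
qed

lemma Rn_An: assumes "3 \<le> p" shows "card (Rn p m) \<le> 4 * card (An p (m + 2))"
proof -
  define enc where "enc u = (pre u @ u @ suf u, (pre u \<noteq> [], suf u \<noteq> []))" for u
  define dec where "dec = (\<lambda>(v :: hletter list, b1 :: bool, b2 :: bool).
     let v1 = (if b1 then tl v else v) in if b2 then butlast v1 else v1)"
  have "dec (enc u) = u" for u
    unfolding dec_def enc_def by (auto simp: pre_def suf_def Let_def)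
  then have inj: "inj_on enc (Rn p m)" by (metis inj_onI)
  have img: "enc ` Rn p m \<subseteq> An p (m + 2) \<times> ((UNIV :: bool set) \<times> (UNIV :: bool set))"
    using enc_An[OF assms] enc_def by auto
  have "card (Rn p m) \<le> card (An p (m + 2) \<times> ((UNIV :: bool set) \<times> (UNIV :: bool set)))"
    using card_inj_on_le[OF inj img] finite_An by (simp del: UNIV_Times_UNIV)
  also have "\<dots> = card (An p (m + 2)) * 4"
    by (simp only: card_cartesian_product card_UNIV_bool)
  finally show ?thesis by simp
qed

fun altI :: "nat \<Rightarrow> hletter list" and altG :: "nat \<Rightarrow> hletter list" where
  "altI 0 = []"
| "altI (Suc n) = Iota # altG n"
| "altG 0 = []"
| "altG (Suc n) = Gam 1 # altI n"

abbreviation alt :: "nat \<Rightarrow> hletter list" where "alt \<equiv> altI"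

lemma alt_props: "2 \<le> p \<Longrightarrow> (nf p (altI n) \<and> wlen p (altI n) = n \<and> set (altI n) \<subseteq> {Iota, Gam 1} \<and> (0 < n \<longrightarrow> hd (altI n) = Iota))
   \<and> (nf p (altG n) \<and> wlen p (altG n) = n \<and> set (altG n) \<subseteq> {Iota, Gam 1} \<and> (0 < n \<longrightarrow> hd (altG n) = Gam 1))"
proof (induction n)
  case (Suc n)
  then show ?case by (cases n) (auto simp: nf_Cons)
qed simp

lemma nf_alt: "2 \<le> p \<Longrightarrow> nf p (alt n)" using alt_props by blast
lemma wlen_alt: "2 \<le> p \<Longrightarrow> wlen p (alt n) = n" using alt_props by blast
lemma set_alt: "2 \<le> p \<Longrightarrow> set (alt n) \<subseteq> {Iota, Gam 1}" using alt_props by blast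
lemma hd_alt: "2 \<le> p \<Longrightarrow> 0 < n \<Longrightarrow> hd (alt n) = Iota" using alt_props by blast

definition glue :: "hletter list \<Rightarrow> hletter list" where
  "glue u = (if u \<noteq> [] \<and> last u \<noteq> Iota then [Iota] else [])"

definition strip :: "hletter list \<Rightarrow> hletter list" where
  "strip w = rev (dropWhile (\<lambda>x. x = Iota \<or> x = Gam 1) (rev w))"

lemma strip_eq: "set ys \<subseteq> {Iota, Gam 1} \<Longrightarrow> strip (P @ Gam 2 # ys) = P @ [Gam 2]"
proof -
  assume a: "set ys \<subseteq> {Iota, Gam 1}"
  have "\<And>x. x \<in> set (rev ys) \<Longrightarrow> x = Iota \<or> x = Gam 1" using a by auto
  then have "dropWhile (\<lambda>x. x = Iota \<or> x = Gam 1) (rev ys @ Gam 2 # rev P) = Gam 2 # rev P"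
    by (simp only: dropWhile_append2) simp
  then show ?thesis unfolding strip_def by simp
qed

lemma Rn_En:
  assumes "3 \<le> p" "m + 3 \<le> T"
  shows "card (Rn p m) \<le> 2 * card (En p T)"
proof -
  define L where "L u = T - (wlen p u + wlen p (glue u) + llen p (Gam 2))" for u
  define enc where "enc u = (u @ glue u @ Gam 2 # alt (L u), glue u \<noteq> [])" for u
  define dec where "dec = (\<lambda>(w, b). if b then butlast (butlast (strip w)) else butlast (strip w))"
  have "dec (enc u) = u" for u
  proof -
    have "strip (u @ glue u @ Gam 2 # alt (L u)) = (u @ glue u) @ [Gam 2]"
      using strip_eq[of "alt (L u)" "u @ glue u"] set_alt[of p "L u"] assms by simp
    then show ?thesis unfolding dec_def enc_def by (auto simp: glue_def butlast_append)
  qed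
  then have inj: "inj_on enc (Rn p m)" by (metis inj_onI)
  have img: "enc ` Rn p m \<subseteq> En p T \<times> UNIV"
  proof
    fix z assume "z \<in> enc ` Rn p m"
    then obtain u where u: "u \<in> Rn p m" "z = enc u" by blast
    have un: "nf p u" "wlen p u \<le> m" using u by (auto simp: Rn_def)
    have g: "wlen p (glue u) \<le> 1" by (simp add: glue_def)
    have w: "wlen p (u @ glue u @ Gam 2 # alt (L u)) = T"
      using un g assms llen_G2[OF assms(1)] wlen_alt[of p "L u"] unfolding L_def by simp
    have n1: "nf p (u @ glue u)" using un by (auto simp: glue_def nf_append nf_Cons)
    have l1: "u @ glue u = [] \<or> last (u @ glue u) = Iota" by (auto simp: glue_def)
    have n2: "nf p (Gam 2 # alt (L u))" using nf_alt[of p "L u"] assms hd_alt[of p "L u"]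
      by (cases "L u") (auto simp: nf_Cons)
    have "nf p ((u @ glue u) @ Gam 2 # alt (L u))" using n1 n2 l1 by (auto simp: nf_append)
    then show "z \<in> En p T \<times> UNIV" using u w by (simp add: enc_def En_def)
  qed
  have "card (Rn p m) \<le> card (En p T \<times> (UNIV :: bool set))"
    using card_inj_on_le[OF inj img] finite_En by simp
  also have "\<dots> = card (En p T) * 2" by (simp add: card_cartesian_product card_UNIV_bool)
  finally show ?thesis by simp
qed



lemma prefix_wlen:
  assumes "xs @ ys = xs' @ ys'" "wlen p xs = wlen p xs'" "vls p xs" "vls p xs'"
  shows "xs = xs'"
proof -
  obtain us where "(xs = xs' @ us \<and> us @ ys = ys') \<or> (xs @ us = xs' \<and> ys = us @ ys')"
    using assms(1) append_eq_append_conv2 by blast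
  then show ?thesis
  proof
    assume a: "xs = xs' @ us \<and> us @ ys = ys'"
    then have "wlen p us = 0" "vls p us" using assms by auto
    then have "us = []" using length_le_wlen[of p us] by simp
    then show ?thesis using a by simp
  next
    assume a: "xs @ us = xs' \<and> ys = us @ ys'"
    then have "wlen p us = 0" "vls p us" using assms by auto
    then have "us = []" using length_le_wlen[of p us] by simp
    then show ?thesis using a by simp
  qed
qed

definition gl :: "hletter list \<Rightarrow> hletter list \<Rightarrow> hletter list" where
  "gl w1 w2 = (if w1 \<noteq> [] \<and> w2 \<noteq> [] \<and> same_factor (last w1) (hd w2)
     then [if last w1 = Iota then Gam 1 else Iota] else [])"

lemma En_En:
  assumes "3 \<le> p"
  shows "card (En p a) * card (En p b) \<le> 2 * card (Rn p (a + b + 1))"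
proof -
  define enc where "enc = (\<lambda>(w1, w2). (w1 @ gl w1 w2 @ w2, gl w1 w2 \<noteq> []))"
  have inj: "inj_on enc (En p a \<times> En p b)"
  proof (rule inj_onI)
    fix z1 z2 assume z: "z1 \<in> En p a \<times> En p b" "z2 \<in> En p a \<times> En p b" "enc z1 = enc z2"
    obtain w1 w2 where zz1: "z1 = (w1, w2)" by (cases z1)
    obtain v1 v2 where zz2: "z2 = (v1, v2)" by (cases z2)
    have n: "nf p w1" "nf p v1" "wlen p w1 = a" "wlen p v1 = a" using z zz1 zz2 by (auto simp: En_def)
    have e: "w1 @ (gl w1 w2 @ w2) = v1 @ (gl v1 v2 @ v2)" "(gl w1 w2 \<noteq> []) = (gl v1 v2 \<noteq> [])"
      using z(3) zz1 zz2 by (auto simp: enc_def)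
    have w1: "w1 = v1" using prefix_wlen[OF e(1), of p] n nf_vls[of p w1] nf_vls[of p v1] by simp
    have "gl w1 w2 = gl v1 v2" using e(2) w1 by (auto simp: gl_def split: if_splits)
    then have "w2 = v2" using e(1) w1 by simp
    then show "z1 = z2" using w1 zz1 zz2 by simp
  qed
  have img: "enc ` (En p a \<times> En p b) \<subseteq> Rn p (a + b + 1) \<times> UNIV"
  proof
    fix z assume "z \<in> enc ` (En p a \<times> En p b)"
    then obtain w1 w2 where w: "w1 \<in> En p a" "w2 \<in> En p b" "z = enc (w1, w2)" by blast
    have n: "nf p w1" "nf p w2" "wlen p w1 = a" "wlen p w2 = b" using w by (auto simp: En_def)
    have v: "vl p (Gam 1)" using assms by simp
    have "nf p (w1 @ gl w1 w2 @ w2)"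
    proof (cases "w1 \<noteq> [] \<and> w2 \<noteq> [] \<and> same_factor (last w1) (hd w2)")
      case True
      then show ?thesis using n v
        by (cases "last w1"; cases "hd w2") (auto simp: gl_def nf_append nf_Cons)
    next
      case False
      then show ?thesis using n by (auto simp: gl_def nf_append)
    qed
    moreover have "wlen p (gl w1 w2) \<le> 1" using assms by (auto simp: gl_def)
    ultimately show "z \<in> Rn p (a + b + 1) \<times> UNIV" using w n by (auto simp: enc_def Rn_def)
  qed
  have "card (En p a \<times> En p b) \<le> card (Rn p (a + b + 1) \<times> (UNIV :: bool set))"
    using card_inj_on_le[OF inj img] finite_Rn by simp
  then show ?thesis by (simp add: card_cartesian_product card_UNIV_bool)
qed

lemma split_wlen:
  "vls p w \<Longrightarrow> wlen p w \<le> m + D \<Longrightarrow> 0 < p \<Longrightarrow> \<exists>k. wlen p (take k w) \<le> m \<and> wlen p (drop k w) \<le> D + p"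
proof (induction w arbitrary: m)
  case Nil then show ?case by simp
next
  case (Cons x w)
  show ?case
  proof (cases "llen p x \<le> m")
    case False
    then have "wlen p (x # w) \<le> D + p" using Cons.prems llen_le[of p x] by simp
    then show ?thesis by (intro exI[of _ 0]) simp
  next
    case True
    have "vls p w" "wlen p w \<le> (m - llen p x) + D" using Cons.prems True by (auto simp: vls_def)
    then obtain k where "wlen p (take k w) \<le> m - llen p x" "wlen p (drop k w) \<le> D + p"
      using Cons.IH Cons.prems by blast
    then show ?thesis using True by (intro exI[of _ "Suc k"]) simp
  qed
qed

lemma shift:
  assumes "0 < p"
  shows "card (Rn p (m + D)) \<le> card (Rn p m) * card (Rn p (D + p))"
proof -
  have "Rn p (m + D) \<subseteq> (\<lambda>(x, y). x @ y) ` (Rn p m \<times> Rn p (D + p))"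
  proof
    fix w assume w: "w \<in> Rn p (m + D)"
    then have "vls p w" "wlen p w \<le> m + D" "nf p w" by (auto simp: Rn_def nf_vls)
    then obtain k where k: "wlen p (take k w) \<le> m" "wlen p (drop k w) \<le> D + p"
      using split_wlen assms by blast
    have "take k w \<in> Rn p m" "drop k w \<in> Rn p (D + p)"
      using k \<open>nf p w\<close> nf_take nf_drop by (auto simp: Rn_def)
    then show "w \<in> (\<lambda>(x, y). x @ y) ` (Rn p m \<times> Rn p (D + p))"
      by (intro image_eqI[of _ _ "(take k w, drop k w)"]) auto
  qed
  then have "card (Rn p (m + D)) \<le> card ((\<lambda>(x, y). x @ y) ` (Rn p m \<times> Rn p (D + p)))"
    by (intro card_mono finite_imageI finite_cartesian_product finite_Rn)
  also have "\<dots> \<le> card (Rn p m \<times> Rn p (D + p))"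
    by (intro card_image_le finite_cartesian_product finite_Rn)
  finally show ?thesis by (simp add: card_cartesian_product)
qed



theorem lemma3p6:
  fixes p :: nat
  assumes "p \<ge> 3"
  shows "\<exists>C::real. C > 0 \<and> (\<exists>x0::real. \<forall>x\<ge>x0.
           2 * (real (card (W p (real_of_int \<lfloor>x / 2\<rfloor>))))^2 \<le> C^2 * real (card (W p x)))"
proof -
  have p0: "0 < p" using assms by simp
  define D where "D = 2 * p + 12"
  define K where "K = card (Rn p (D + p))"
  have K1: "1 \<le> K" unfolding K_def by (rule card_Rn_pos)
  define C :: real where "C = 128 * real K"
  have C1: "1 \<le> C" using K1 unfolding C_def by simp
  have main: "2 * (real (card (W p (real_of_int \<lfloor>x / 2\<rfloor>))))^2 \<le> C^2 * real (card (W p x))"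
    if x: "x \<ge> 20" for x
  proof -
    define X where "X = nat \<lfloor>x\<rfloor>"
    define a where "a = nat \<lfloor>x / 2\<rfloor>"
    define y where "y = real_of_int \<lfloor>x / 2\<rfloor>"
    define t where "t = a div 2 + p"
    define m2 where "m2 = (X - 6) div 2"
    have fx: "20 \<le> \<lfloor>x\<rfloor>" using x by (simp add: le_floor_iff)
    have X20: "20 \<le> X" using fx unfolding X_def by linarith
    have Xx: "real X \<le> x" unfolding X_def using fx by (simp add: of_nat_nat)
    have "real_of_int \<lfloor>x / 2\<rfloor> \<le> x / 2" by (rule of_int_floor_le)
    then have "real_of_int (2 * \<lfloor>x / 2\<rfloor>) \<le> x" by simp
    then have "2 * \<lfloor>x / 2\<rfloor> \<le> \<lfloor>x\<rfloor>" by (simp only: le_floor_iff)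
    then have aX: "2 * a \<le> X" unfolding a_def X_def by linarith
    have ya: "nat \<lfloor>y\<rfloor> = a" unfolding y_def a_def by simp
    define w1 where "w1 = card (W p y)"
    define w2 where "w2 = card (W p x)"
    define E where "E = card (En p (t + 3))"
    have h1: "w1 \<le> card (Rn p t)" using upper[OF p0, of y] ya unfolding w1_def t_def by simp
    have h2: "card (Rn p t) \<le> 2 * E" unfolding E_def by (rule Rn_En[OF assms]) simp
    have eq: "t + 3 + (t + 3) + 1 = 2 * t + 7" by simp
    have h3: "E * E \<le> 2 * card (Rn p (2 * t + 7))"
      using En_En[OF assms, of "t + 3" "t + 3"] unfolding E_def eq .
    have d1: "2 * (a div 2) \<le> a" by simp
    have d2: "X \<le> 2 * m2 + 7" unfolding m2_def using X20 by simp
    have le: "2 * t + 7 \<le> m2 + D"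
    proof -
      have "2 * t + 7 = 2 * (a div 2) + 2 * p + 7" unfolding t_def by simp
      also have "\<dots> \<le> m2 + D" unfolding D_def using d1 d2 aX by linarith
      finally show ?thesis .
    qed
    have h4: "card (Rn p (2 * t + 7)) \<le> card (Rn p (m2 + D))" using le by (rule card_Rn_mono)
    have h5: "card (Rn p (m2 + D)) \<le> card (Rn p m2) * K" unfolding K_def by (rule shift[OF p0])
    have h6: "card (Rn p m2) \<le> 4 * card (An p (m2 + 2))" by (rule Rn_An[OF assms])
    have d3: "2 * m2 + 6 \<le> X" unfolding m2_def using X20 by simp
    have "2 * (m2 + 2) + 2 \<le> X" using d3 by (simp add: algebra_simps)
    then have "real (2 * (m2 + 2) + 2) \<le> real X" by (simp only: of_nat_le_iff)
    then have h7: "card (An p (m2 + 2)) \<le> 2 * w2" unfolding w2_def using lower[OF p0] Xx by simp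
    have w1E: "w1 \<le> 2 * E" using h1 h2 by linarith
    have "w1 * w1 \<le> (2 * E) * (2 * E)" using mult_le_mono[OF w1E w1E] .
    also have "\<dots> = 4 * (E * E)" by simp
    also have "\<dots> \<le> 8 * card (Rn p (2 * t + 7))" using h3 by simp
    also have "\<dots> \<le> 8 * (card (Rn p m2) * K)" using h4 h5 by simp
    also have "\<dots> \<le> 8 * (4 * card (An p (m2 + 2)) * K)" using h6 by simp
    also have "\<dots> \<le> 8 * (4 * (2 * w2) * K)" using h7 by simp
    finally have nat: "w1 * w1 \<le> 64 * K * w2" by (simp add: algebra_simps)
    then have "real (w1 * w1) \<le> real (64 * K * w2)" by (simp only: of_nat_le_iff)
    then have r: "2 * (real w1)^2 \<le> C * real w2" unfolding C_def by (simp add: power2_eq_square)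
    have "C * real w2 \<le> C^2 * real w2" using C1 by (simp add: power2_eq_square mult_right_mono)
    then show ?thesis using r unfolding w1_def w2_def y_def by simp
  qed
  have A: "\<forall>x\<ge>(20::real). 2 * (real (card (W p (real_of_int \<lfloor>x / 2\<rfloor>))))^2 \<le> C^2 * real (card (W p x))"
    using main by blast
  have B: "C > 0" using C1 by simp
  show ?thesis using A B by blast
qed


end
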